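(* Let $1<p_1<2$ and $\alpha=\frac1{p_1}-\frac12$. Let $a:\mathbb{Z}^n\to\mathbb{C}$ satisfy $|a(\xi)|\le C\langle\xi\rangle^m$ for all $\xi\in\mathbb{Z}^n$, with $m<-n-\alpha n$. Then the Fourier multiplier $T_a$ is a nuclear operator on $B^w_{p_1,2}(\mathbb{T}^n)$ for every $w\in\mathbb{R}$, and $\mathrm{Tr}(T_a)=\sum_{\xi\in\mathbb{Z}^n}a(\xi)=\sum_n\lambda_n(T_a)$, where $(\lambda_n(T_a))$ is the sequence of eigenvalues of $T_a$ with multiplicities counted.
   Context: $\widehat f(\xi)=\int_{\mathbb{T}^n}e^{-i2\pi x\cdot\xi}f(x)dx$, $\langle\xi\rangle=(1+|\xi|^2)^{1/2}$. $T_au(x)=\sum_{\xi\in\mathbb{Z}^n}e^{i2\pi x\cdot\xi}a(\xi)\widehat u(\xi)$. Periodic Besov spaces: $\|f\|_{B^w_{p,q}}=\big(\sum_{m\ge0}2^{mwq}\|\sum_{2^m\le|\xi|<2^{m+1}}e^{i2\pi x\cdot\xi}\widehat f(\xi)\|^q_{L^p(\mathbb{T}^n)}\big)^{1/q}$. $T:E\to E$ is nuclear if $T=\sum_ne'_n(\cdot)y_n$ with $\sum_n\|e'_n\|_{E'}\|y_n\|_E<\infty$; its nuclear trace is $\sum_ne'_n(y_n)$. *)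

theory Defs
  imports "HOL-Analysis.Analysis" "HOL-Library.Function_Algebras"
begin

text \<open>Dimension n is the cardinality of the finite index type 'n.
  Frequencies: int^'n (= Z^n); torus points: real^'n restricted to [0,1]^n.
  A periodic distribution / function on T^n is represented by its sequence
  of Fourier coefficients c :: int^'n => complex.\<close>

definition tinner :: "real^'n \<Rightarrow> int^'n \<Rightarrow> real" where
  "tinner x \<xi> = (\<Sum>i\<in>UNIV. x$i * of_int (\<xi>$i))"

definition inorm :: "int^'n \<Rightarrow> real" where
  "inorm \<xi> = sqrt (\<Sum>i\<in>UNIV. (of_int (\<xi>$i))^2)"

definition jbracket :: "int^'n \<Rightarrow> real" where
  "jbracket \<xi> = sqrt (1 + (inorm \<xi>)^2)"

definition dyadic_block :: "nat \<Rightarrow> (int^'n) set" where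
  "dyadic_block m = {\<xi>. (m = 0 \<or> 2 ^ m \<le> inorm \<xi>) \<and> inorm \<xi> < 2 ^ (m + 1)}"

definition trig_block :: "nat \<Rightarrow> (int^'n \<Rightarrow> complex) \<Rightarrow> real^'n \<Rightarrow> complex" where
  "trig_block m c x = (\<Sum>\<xi>\<in>dyadic_block m. exp (\<i> * 2 * pi * complex_of_real (tinner x \<xi>)) * c \<xi>)"

definition torus_Lp_norm :: "real \<Rightarrow> (real^'n \<Rightarrow> complex) \<Rightarrow> real" where
  "torus_Lp_norm p f = (integral (cbox 0 One) (\<lambda>x. norm (f x) powr p)) powr (1 / p)"

definition besov_term :: "real \<Rightarrow> real \<Rightarrow> real \<Rightarrow> (int^'n \<Rightarrow> complex) \<Rightarrow> nat \<Rightarrow> real" where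
  "besov_term w p q c m = (2 powr (real m * w) * torus_Lp_norm p (trig_block m c)) powr q"

definition besov_space :: "real \<Rightarrow> real \<Rightarrow> real \<Rightarrow> (int^'n \<Rightarrow> complex) set" where
  "besov_space w p q = {c. summable (besov_term w p q c)}"

definition besov_norm :: "real \<Rightarrow> real \<Rightarrow> real \<Rightarrow> (int^'n \<Rightarrow> complex) \<Rightarrow> real" where
  "besov_norm w p q c = (suminf (besov_term w p q c)) powr (1 / q)"

definition fourier_mult :: "(int^'n \<Rightarrow> complex) \<Rightarrow> (int^'n \<Rightarrow> complex) \<Rightarrow> (int^'n \<Rightarrow> complex)" where
  "fourier_mult a c = (\<lambda>\<xi>. a \<xi> * c \<xi>)"

definition besov_dual :: "real \<Rightarrow> real \<Rightarrow> real \<Rightarrow> ((int^'n \<Rightarrow> complex) \<Rightarrow> complex) \<Rightarrow> bool" where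
  "besov_dual w p q l \<longleftrightarrow>
     (\<forall>c\<in>besov_space w p q. \<forall>d\<in>besov_space w p q. l (\<lambda>\<xi>. c \<xi> + d \<xi>) = l c + l d) \<and>
     (\<forall>s. \<forall>c\<in>besov_space w p q. l (\<lambda>\<xi>. s * c \<xi>) = s * l c) \<and>
     (\<exists>K. \<forall>c\<in>besov_space w p q. norm (l c) \<le> K * besov_norm w p q c)"

definition dual_norm :: "real \<Rightarrow> real \<Rightarrow> real \<Rightarrow> ((int^'n \<Rightarrow> complex) \<Rightarrow> complex) \<Rightarrow> real" where
  "dual_norm w p q l = Sup {norm (l c) | c. c \<in> besov_space w p q \<and> besov_norm w p q c \<le> 1}"

definition nuclear_rep :: "real \<Rightarrow> real \<Rightarrow> real \<Rightarrow> ((int^'n \<Rightarrow> complex) \<Rightarrow> (int^'n \<Rightarrow> complex))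
    \<Rightarrow> (nat \<Rightarrow> (int^'n \<Rightarrow> complex) \<Rightarrow> complex) \<Rightarrow> (nat \<Rightarrow> int^'n \<Rightarrow> complex) \<Rightarrow> bool" where
  "nuclear_rep w p q T l y \<longleftrightarrow>
     (\<forall>k. besov_dual w p q (l k)) \<and> (\<forall>k. y k \<in> besov_space w p q) \<and>
     summable (\<lambda>k. dual_norm w p q (l k) * besov_norm w p q (y k)) \<and>
     (\<forall>c\<in>besov_space w p q. T c \<in> besov_space w p q \<and>
        (\<lambda>N. besov_norm w p q (\<lambda>\<xi>. T c \<xi> - (\<Sum>k<N. l k c * y k \<xi>))) \<longlonglongrightarrow> 0)"

definition nuclear_on :: "real \<Rightarrow> real \<Rightarrow> real \<Rightarrow> ((int^'n \<Rightarrow> complex) \<Rightarrow> (int^'n \<Rightarrow> complex)) \<Rightarrow> bool" where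
  "nuclear_on w p q T \<longleftrightarrow> (\<exists>l y. nuclear_rep w p q T l y)"

definition nuclear_trace_of :: "(nat \<Rightarrow> (int^'n \<Rightarrow> complex) \<Rightarrow> complex) \<Rightarrow> (nat \<Rightarrow> int^'n \<Rightarrow> complex) \<Rightarrow> complex" where
  "nuclear_trace_of l y = (\<Sum>k. l k (y k))"

definition besov_eigenvalues :: "real \<Rightarrow> real \<Rightarrow> real \<Rightarrow> ((int^'n \<Rightarrow> complex) \<Rightarrow> (int^'n \<Rightarrow> complex)) \<Rightarrow> complex set" where
  "besov_eigenvalues w p q T = {\<mu>. \<exists>c\<in>besov_space w p q. c \<noteq> 0 \<and> T c = (\<lambda>\<xi>. \<mu> * c \<xi>)}"

definition gen_eigenspace :: "real \<Rightarrow> real \<Rightarrow> real \<Rightarrow> ((int^'n \<Rightarrow> complex) \<Rightarrow> (int^'n \<Rightarrow> complex)) \<Rightarrow> complex \<Rightarrow> (int^'n \<Rightarrow> complex) set" where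
  "gen_eigenspace w p q T \<mu> = {c \<in> besov_space w p q.
      \<exists>k. ((\<lambda>d. (\<lambda>\<xi>. T d \<xi> - \<mu> * d \<xi>)) ^^ k) c = 0}"

definition alg_mult :: "real \<Rightarrow> real \<Rightarrow> real \<Rightarrow> ((int^'n \<Rightarrow> complex) \<Rightarrow> (int^'n \<Rightarrow> complex)) \<Rightarrow> complex \<Rightarrow> nat" where
  "alg_mult w p q T \<mu> = Vector_Spaces.vector_space.dim (\<lambda>(s::complex) (f::int^'n \<Rightarrow> complex). (\<lambda>\<xi>. s * f \<xi>)) (gen_eigenspace w p q T \<mu>)"

end

theory Submission
  imports Defs
begin

lemma integral_lborel_prod:
  fixes f :: "'a::euclidean_space \<Rightarrow> real \<Rightarrow> complex"
  assumes [measurable]: "\<And>b. b \<in> Basis \<Longrightarrow> f b \<in> borel_measurable borel"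
  assumes int: "\<And>b. b \<in> Basis \<Longrightarrow> integrable lborel (f b)"
  shows "(\<integral>x. (\<Prod>b\<in>Basis. f b (x \<bullet> b)) \<partial>lborel) = (\<Prod>b\<in>Basis. (\<integral>x. f b x \<partial>lborel))"
proof -
  interpret finite_product_sigma_finite "\<lambda>_. lborel" "Basis::'a set"
    by standard simp
  have "(\<integral>x. (\<Prod>b\<in>Basis. f b (x \<bullet> b)) \<partial>lborel) = 
     (\<integral>x. (\<Prod>b\<in>Basis. f b ((\<Sum>b'\<in>Basis. x b' *\<^sub>R b') \<bullet> b)) \<partial>(\<Pi>\<^sub>M b\<in>Basis. lborel))"
    by (subst lborel_eq) (simp add: integral_distr)
  also have "\<dots> = (\<integral>x. (\<Prod>b\<in>Basis. f b (x b)) \<partial>(\<Pi>\<^sub>M b\<in>Basis. lborel))"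
    apply (rule Bochner_Integration.integral_cong[OF refl])
    apply (rule prod.cong[OF refl])
    apply (simp add: inner_sum_left inner_Basis)
    apply (subst sum.cong[OF refl, where h="\<lambda>b'. if b' = _ then x b' else 0"])
    by (auto simp: inner_Basis)
  also have "\<dots> = (\<Prod>b\<in>Basis. (\<integral>x. f b x \<partial>lborel))"
    by (rule product_integral_prod) (auto intro: int)
  finally show ?thesis .
qed

lemma exp_int_has_integral:
  fixes k :: int
  shows "((\<lambda>t::real. exp (\<i> * 2 * pi * complex_of_real (t * of_int k))) has_integral (if k = 0 then 1 else 0)) {0..1}"
proof (cases "k = 0")
  case True
  then show ?thesis using has_integral_const_real[of "1::complex" 0 1] by simp
next
  case False
  define G where "G t = exp (\<i> * 2 * pi * complex_of_real (t * of_int k)) / (\<i> * 2 * pi * of_int k)" for t :: real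
  have d: "(G has_vector_derivative exp (\<i> * 2 * pi * complex_of_real (t * of_int k))) (at t within {0..1})" for t
  proof -
    define H where "H z = exp (\<i> * 2 * pi * (z * of_int k)) / (\<i> * 2 * pi * of_int k)" for z :: complex
    have GH: "G = (\<lambda>t. H (of_real t))" by (auto simp: G_def H_def)
    have "(H has_field_derivative exp (\<i> * 2 * pi * (of_real t * of_int k))) (at (of_real t))"
      unfolding H_def using False
      by (auto intro!: derivative_eq_intros simp: field_simps)
    then show ?thesis unfolding GH using has_vector_derivative_real_field by fastforce
  qed
  have "G 1 - G 0 = 0"
  proof -
    have "exp (\<i> * 2 * pi * complex_of_real (1 * of_int k)) = exp ((2 * of_int k * pi) * \<i>)"
      by (simp add: algebra_simps)
    also have "\<dots> = 1" by (rule exp_integer_2pi) simp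
    finally show ?thesis by (simp add: G_def)
  qed
  with fundamental_theorem_of_calculus[of 0 1 G, OF _ d] False show ?thesis by simp
qed

lemma exp_int_integral_real:
  fixes k :: real assumes "k \<in> \<int>"
  shows "integral {0..1} (\<lambda>t::real. exp (\<i> * 2 * pi * complex_of_real (t * k))) = (if k = 0 then 1 else 0)"
proof -
  obtain j where j: "k = of_int j" using assms Ints_cases by blast
  show ?thesis using exp_int_has_integral[of j] unfolding j by (simp add: integral_unique)
qed

definition rvec :: "int^'n \<Rightarrow> real^'n" where "rvec \<eta> = (\<chi> i. real_of_int (\<eta>$i))"

lemma tinner_eq: "tinner x \<eta> = (\<Sum>b\<in>Basis. (x \<bullet> b) * (rvec \<eta> \<bullet> b))"
proof -
  have "tinner x \<eta> = x \<bullet> rvec \<eta>" by (simp add: tinner_def inner_vec_def rvec_def)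
  also have "\<dots> = (\<Sum>b\<in>Basis. (x \<bullet> b) * (rvec \<eta> \<bullet> b))" by (rule euclidean_inner)
  finally show ?thesis .
qed

lemma indicator_cube_prod:
  "indicator (cbox (0::'a::euclidean_space) One) x = (\<Prod>b\<in>Basis. indicator {0..1} (x \<bullet> b) :: real)"
proof (cases "x \<in> cbox 0 One")
  case True
  then show ?thesis by (auto simp: mem_box intro!: prod.neutral)
next
  case False
  then obtain b where "b \<in> Basis" "\<not> (0 \<le> x \<bullet> b \<and> x \<bullet> b \<le> 1)" by (auto simp: mem_box)
  then show ?thesis using False by (auto intro!: prod_zero[OF finite_Basis] bexI[of _ b])
qed

lemma rvec_Basis_Ints: "b \<in> Basis \<Longrightarrow> rvec (\<eta>::int^'n) \<bullet> b \<in> \<int>"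
  by (auto simp: Basis_vec_def rvec_def cart_eq_inner_axis[symmetric])

lemma rvec_eq_0: "rvec \<eta> = 0 \<longleftrightarrow> \<eta> = 0"
  by (auto simp: rvec_def vec_eq_iff)

lemma orth:
  fixes \<eta> :: "int^'n"
  shows "integral (cbox 0 One) (\<lambda>x::real^'n. exp (\<i> * 2 * pi * complex_of_real (tinner x \<eta>))) = (if \<eta> = 0 then 1 else 0)"
proof -
  define E where "E x = exp (\<i> * 2 * pi * complex_of_real (tinner x \<eta>))" for x :: "real^'n"
  define g where "g b t = indicator {0..1} t *\<^sub>R exp (\<i> * 2 * pi * complex_of_real (t * (rvec \<eta> \<bullet> b)))" for b :: "real^'n" and t :: real
  have contE: "continuous_on UNIV E" unfolding E_def tinner_def by (intro continuous_intros)
  have si: "set_integrable lborel (cbox 0 One) E"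
    unfolding set_integrable_def by (rule borel_integrable_compact) (auto intro: continuous_on_subset[OF contE])
  have "integral (cbox 0 One) E = (LINT x : cbox 0 One | lborel. E x)"
    using set_borel_integral_eq_integral(2)[OF si] by simp
  also have "\<dots> = (\<integral>x. (\<Prod>b\<in>Basis. g b (x \<bullet> b)) \<partial>lborel)"
    unfolding set_lebesgue_integral_def
  proof (rule Bochner_Integration.integral_cong[OF refl])
    fix x :: "real^'n"
    have "E x = (\<Prod>b\<in>Basis. exp (\<i> * 2 * pi * complex_of_real ((x \<bullet> b) * (rvec \<eta> \<bullet> b))))"
      unfolding E_def tinner_eq by (simp add: sum_distrib_left exp_sum[symmetric])
    then show "indicator (cbox 0 One) x *\<^sub>R E x = (\<Prod>b\<in>Basis. g b (x \<bullet> b))"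
      by (simp add: g_def indicator_cube_prod scaleR_conv_of_real prod.distrib of_real_prod)
  qed
  also have "\<dots> = (\<Prod>b\<in>Basis. (\<integral>t. g b t \<partial>lborel))"
  proof (rule integral_lborel_prod)
    fix b :: "real^'n" assume "b \<in> Basis"
    show "g b \<in> borel_measurable borel" unfolding g_def by measurable
    show "integrable lborel (g b)" unfolding g_def
      by (rule borel_integrable_compact) (auto intro!: continuous_intros)
  qed
  also have "\<dots> = (\<Prod>b\<in>(Basis::(real^'n) set). (if rvec \<eta> \<bullet> b = 0 then 1 else 0))"
  proof (rule prod.cong[OF refl])
    fix b :: "real^'n" assume b: "b \<in> Basis"
    have "set_integrable lborel {0..1} (\<lambda>t. exp (\<i> * 2 * pi * complex_of_real (t * (rvec \<eta> \<bullet> b))))"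
      unfolding set_integrable_def by (rule borel_integrable_compact) (auto intro!: continuous_intros)
    from set_borel_integral_eq_integral(2)[OF this] exp_int_integral_real[OF rvec_Basis_Ints[OF b]]
    show "(\<integral>t. g b t \<partial>lborel) = (if rvec \<eta> \<bullet> b = 0 then 1 else 0)"
      unfolding g_def set_lebesgue_integral_def by simp
  qed
  also have "\<dots> = (if \<eta> = 0 then 1 else 0)"
  proof (cases "\<eta> = 0")
    case True then have "rvec \<eta> = 0" by (simp add: rvec_eq_0)
    then show ?thesis using True by simp
  next
    case False
    then have "rvec \<eta> \<noteq> 0" by (simp add: rvec_eq_0)
    then obtain b :: "real^'n" where "b \<in> Basis" "rvec \<eta> \<bullet> b \<noteq> 0" using euclidean_all_zero_iff by blast
    then show ?thesis using False by (auto intro!: prod_zero bexI[of _ b])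
  qed
  finally show ?thesis unfolding E_def .
qed

lemma finite_int_box: "finite {\<xi>::int^'n. \<forall>i. \<bar>\<xi>$i\<bar> \<le> K}"
proof -
  have "{\<xi>::int^'n. \<forall>i. \<bar>\<xi>$i\<bar> \<le> K} \<subseteq> vec_lambda ` (PiE UNIV (\<lambda>_. {-K..K}))"
  proof
    fix \<xi> :: "int^'n" assume "\<xi> \<in> {\<xi>. \<forall>i. \<bar>\<xi>$i\<bar> \<le> K}"
    then have "vec_nth \<xi> \<in> PiE UNIV (\<lambda>_. {-K..K})" by (auto simp: abs_le_iff) (metis minus_le_iff)
    then show "\<xi> \<in> vec_lambda ` (PiE UNIV (\<lambda>_. {-K..K}))" by (rule rev_image_eqI) simp
  qed
  moreover have "finite (vec_lambda ` (PiE (UNIV::'n set) (\<lambda>_. {-K..K})))"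
    by (intro finite_imageI finite_PiE) auto
  ultimately show ?thesis by (rule finite_subset)
qed

lemma card_int_box: "card {\<xi>::int^'n. \<forall>i. \<bar>\<xi>$i\<bar> \<le> K} \<le> (nat (2*K+1)) ^ CARD('n)"
proof -
  have "{\<xi>::int^'n. \<forall>i. \<bar>\<xi>$i\<bar> \<le> K} \<subseteq> vec_lambda ` (PiE UNIV (\<lambda>_. {-K..K}))"
  proof
    fix \<xi> :: "int^'n" assume "\<xi> \<in> {\<xi>. \<forall>i. \<bar>\<xi>$i\<bar> \<le> K}"
    then have "vec_nth \<xi> \<in> PiE UNIV (\<lambda>_. {-K..K})" by (auto simp: abs_le_iff) (metis minus_le_iff)
    then show "\<xi> \<in> vec_lambda ` (PiE UNIV (\<lambda>_. {-K..K}))" by (rule rev_image_eqI) simp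
  qed
  then have "card {\<xi>::int^'n. \<forall>i. \<bar>\<xi>$i\<bar> \<le> K} \<le> card (vec_lambda ` (PiE (UNIV::'n set) (\<lambda>_. {-K..K})))"
    by (intro card_mono finite_imageI finite_PiE) auto
  also have "\<dots> \<le> card (PiE (UNIV::'n set) (\<lambda>_. {-K..K}))" by (rule card_image_le) (intro finite_PiE, auto)
  also have "\<dots> = (nat (2*K+1)) ^ CARD('n)" by (simp add: card_PiE)
  finally show ?thesis .
qed

lemma abs_comp_le_inorm: "real_of_int \<bar>\<xi>$i\<bar> \<le> inorm \<xi>"
proof -
  have "real_of_int \<bar>\<xi>$i\<bar> = sqrt ((real_of_int (\<xi>$i))^2)" by simp
  also have "\<dots> \<le> inorm \<xi>" unfolding inorm_def
    by (rule real_sqrt_le_mono) (rule member_le_sum, auto)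
  finally show ?thesis .
qed

lemma dyadic_block_sub_box: "dyadic_block m \<subseteq> {\<xi>::int^'n. \<forall>i. \<bar>\<xi>$i\<bar> \<le> 2^(m+1)}"
proof
  fix \<xi> :: "int^'n" assume "\<xi> \<in> dyadic_block m"
  then have "inorm \<xi> < 2^(m+1)" by (simp add: dyadic_block_def)
  then have "real_of_int \<bar>\<xi>$i\<bar> \<le> 2^(m+1)" for i using abs_comp_le_inorm[of \<xi> i] by linarith
  then have "\<bar>\<xi>$i\<bar> \<le> 2^(m+1)" for i by (metis of_int_le_iff of_int_numeral of_int_power)
  then show "\<xi> \<in> {\<xi>::int^'n. \<forall>i. \<bar>\<xi>$i\<bar> \<le> 2^(m+1)}" by simp
qed

lemma finite_dyadic_block[simp]: "finite (dyadic_block m)"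
  using finite_subset[OF dyadic_block_sub_box finite_int_box] .

lemma cont_trig_block: "continuous_on S (trig_block m c)"
  unfolding trig_block_def tinner_def by (intro continuous_intros)

lemma Lp_le_const:
  assumes p: "0 < p" and cf: "continuous_on (cbox 0 One) f" and S: "\<And>x. x \<in> cbox 0 One \<Longrightarrow> norm (f x) \<le> S"
    and S0: "0 \<le> S"
  shows "torus_Lp_norm p (f :: real^'n \<Rightarrow> complex) \<le> S"
proof -
  have ci: "continuous_on (cbox 0 One) (\<lambda>x. norm (f x) powr p)"
    using p by (intro continuous_on_powr' continuous_intros cf) auto
  have "integral (cbox 0 One) (\<lambda>x. norm (f x) powr p) \<le> integral (cbox (0::real^'n) One) (\<lambda>x. S powr p)"
    by (rule integral_le) (auto intro!: integrable_continuous ci powr_mono2 S p[THEN less_imp_le])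
  also have "\<dots> = S powr p" by (simp add: content_cbox_if)
  finally have "integral (cbox 0 One) (\<lambda>x. norm (f x) powr p) \<le> S powr p" .
  moreover have "0 \<le> integral (cbox 0 One) (\<lambda>x. norm (f x) powr p)"
    by (rule integral_nonneg) (auto intro!: integrable_continuous ci)
  ultimately have "torus_Lp_norm p f \<le> (S powr p) powr (1/p)"
    unfolding torus_Lp_norm_def using p by (intro powr_mono2) auto
  also have "\<dots> = S" using p S0 by (simp add: powr_powr)
  finally show ?thesis .
qed

lemma L1_le_Lp:
  assumes p: "1 < p" and cf: "continuous_on (cbox 0 One) (f :: real^'n \<Rightarrow> complex)"
  shows "integral (cbox 0 One) (\<lambda>x. norm (f x)) \<le> torus_Lp_norm p f"
proof -
  define I where "I = integral (cbox 0 One) (\<lambda>x. norm (f x))"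
  define J where "J = integral (cbox 0 One) (\<lambda>x. norm (f x) powr p)"
  define L where "L = J powr (1/p)"
  have ci: "continuous_on (cbox 0 One) (\<lambda>x. norm (f x) powr p)"
    using p by (intro continuous_on_powr' continuous_intros cf) auto
  have ci1: "continuous_on (cbox 0 One) (\<lambda>x. norm (f x))" by (intro continuous_intros cf)
  have J0: "0 \<le> J" unfolding J_def by (rule integral_nonneg) (auto intro!: integrable_continuous ci)
  have L0: "0 \<le> L" unfolding L_def by simp
  have JL: "J = L powr p" unfolding L_def using J0 p by (simp add: powr_powr)
  have key: "I \<le> lam" if lam: "L < lam" for lam
  proof -
    have lam0: "0 < lam" using L0 lam by linarith
    define q where "q = p / (p - 1)"
    have q: "q > 1" "1/p + 1/q = 1" using p by (auto simp: q_def field_simps)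
    have pw: "norm (f x) \<le> norm (f x) powr p / (p * lam powr (p - 1)) + lam * (1 - 1/p)" for x
    proof -
      have "(norm (f x) / lam) * 1 \<le> (norm (f x) / lam) powr p / p + 1 powr q / q"
        by (rule Youngs_inequality) (use p q lam0 in auto)
      also have "1 powr q / q = 1 - 1/p" using q by simp
      finally have "norm (f x) / lam \<le> (norm (f x) / lam) powr p / p + (1 - 1/p)" by simp
      then have "norm (f x) \<le> lam * ((norm (f x) / lam) powr p / p) + lam * (1 - 1/p)"
        using lam0 by (simp add: field_simps)
      moreover have "lam * ((norm (f x) / lam) powr p / p) = norm (f x) powr p / (p * lam powr (p - 1))"
        using lam0 p by (simp add: powr_divide powr_diff field_simps)
      ultimately show ?thesis by simp
    qed
    have "I \<le> integral (cbox 0 One) (\<lambda>x. norm (f x) powr p / (p * lam powr (p - 1)) + lam * (1 - 1/p))"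
      unfolding I_def using p lam0 by (intro integral_le) (auto intro!: integrable_continuous ci ci1 continuous_intros pw)
    also have "\<dots> = J / (p * lam powr (p - 1)) + lam * (1 - 1/p)"
      unfolding J_def using p lam0
      by (subst integral_add) (auto intro!: integrable_continuous ci continuous_intros simp: content_cbox_if)
    also have "J / (p * lam powr (p - 1)) \<le> lam / p"
    proof -
      have "J \<le> lam powr p" unfolding JL using p L0 lam by (intro powr_mono2) auto
      also have "lam powr p = lam * lam powr (p - 1)" using lam0 by (simp add: powr_diff)
      finally show ?thesis using lam0 p by (simp add: field_simps)
    qed
    then have "J / (p * lam powr (p - 1)) + lam * (1 - 1/p) \<le> lam / p + lam * (1 - 1/p)" by simp
    also have "\<dots> = lam" using p by (simp add: field_simps)
    finally show ?thesis by simp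
  qed
  have "I \<le> L"
  proof (rule ccontr)
    assume "\<not> I \<le> L"
    then have "L < (I + L)/2" by simp
    from key[OF this] \<open>\<not> I \<le> L\<close> show False by simp
  qed
  then show ?thesis unfolding I_def L_def J_def torus_Lp_norm_def .
qed

lemma tinner_diff: "tinner x (\<eta> - \<xi>) = tinner x \<eta> - tinner x \<xi>"
  by (simp add: tinner_def sum_subtractf[symmetric] algebra_simps)

lemma coeff_integral:
  assumes "\<xi> \<in> dyadic_block m"
  shows "integral (cbox 0 One) (\<lambda>x::real^'n. trig_block m c x * exp (- (\<i> * 2 * pi * complex_of_real (tinner x \<xi>)))) = c \<xi>"
proof -
  have eq: "trig_block m c x * exp (- (\<i> * 2 * pi * complex_of_real (tinner x \<xi>))) =
     (\<Sum>\<eta>\<in>dyadic_block m. c \<eta> * exp (\<i> * 2 * pi * complex_of_real (tinner x (\<eta> - \<xi>))))" for x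
    unfolding trig_block_def sum_distrib_right tinner_diff
    by (intro sum.cong refl) (simp add: exp_diff[symmetric] exp_minus field_simps)
  have "integral (cbox 0 One) (\<lambda>x::real^'n. trig_block m c x * exp (- (\<i> * 2 * pi * complex_of_real (tinner x \<xi>))))
     = (\<Sum>\<eta>\<in>dyadic_block m. c \<eta> * integral (cbox 0 One) (\<lambda>x::real^'n. exp (\<i> * 2 * pi * complex_of_real (tinner x (\<eta> - \<xi>)))))"
    unfolding eq
    by (subst integral_sum) (auto intro!: integrable_continuous continuous_intros simp: tinner_def)
  also have "\<dots> = (\<Sum>\<eta>\<in>dyadic_block m. if \<eta> = \<xi> then c \<eta> else 0)"
    by (intro sum.cong refl) (simp add: orth)
  also have "\<dots> = c \<xi>" using assms by simp
  finally show ?thesis .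
qed

lemma coeff_bound:
  assumes p: "1 < p" and "\<xi> \<in> dyadic_block m"
  shows "norm (c \<xi>) \<le> torus_Lp_norm p (trig_block m c :: real^'n \<Rightarrow> complex)"
proof -
  have "norm (c \<xi>) = norm (integral (cbox 0 One) (\<lambda>x::real^'n. trig_block m c x * exp (- (\<i> * 2 * pi * complex_of_real (tinner x \<xi>)))))"
    using coeff_integral[OF assms(2)] by simp
  also have "\<dots> \<le> integral (cbox 0 One) (\<lambda>x::real^'n. norm (trig_block m c x))"
    by (rule integral_norm_bound_integral)
       (auto intro!: integrable_continuous continuous_intros cont_trig_block simp: tinner_def norm_mult)
  also have "\<dots> \<le> torus_Lp_norm p (trig_block m c :: real^'n \<Rightarrow> complex)"
    by (rule L1_le_Lp[OF p cont_trig_block])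
  finally show ?thesis .
qed

lemma has_sum_exhaust:
  assumes hs: "(f has_sum s) S" and fin: "\<And>N. finite (F N)" and sub: "\<And>N. F N \<subseteq> S"
    and ev: "\<And>x. x \<in> S \<Longrightarrow> eventually (\<lambda>N. x \<in> F N) sequentially"
  shows "(\<lambda>N. sum f (F N)) \<longlonglongrightarrow> s"
proof -
  have lim: "filterlim F (finite_subsets_at_top S) sequentially"
    unfolding filterlim_finite_subsets_at_top
  proof (intro allI impI)
    fix X assume X: "finite X \<and> X \<subseteq> S"
    have "eventually (\<lambda>N. \<forall>x\<in>X. x \<in> F N) sequentially"
      using X ev by (intro eventually_ball_finite) auto
    then show "eventually (\<lambda>N. finite (F N) \<and> X \<subseteq> F N \<and> F N \<subseteq> S) sequentially"
      by (rule eventually_mono) (use fin sub in auto)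
  qed
  from hs have "(sum f \<longlongrightarrow> s) (finite_subsets_at_top S)" unfolding has_sum_def .
  from filterlim_compose[OF this lim] show ?thesis .
qed

lemma dyadic_block_ex: "\<exists>m. \<xi> \<in> dyadic_block m"
proof -
  obtain k where k: "inorm \<xi> < 2 ^ k" using real_arch_pow[of 2 "inorm \<xi>"] by auto
  have "(2::real) ^ k \<le> 2 ^ (k+1)" by (intro power_increasing) auto
  with k have k1: "inorm \<xi> < 2 ^ (k + 1)" by linarith
  define m where "m = (LEAST m. inorm \<xi> < 2 ^ (m + 1))"
  have m1: "inorm \<xi> < 2 ^ (m + 1)" unfolding m_def by (rule LeastI[of _ k], rule k1)
  show ?thesis
  proof (cases m)
    case 0 then show ?thesis using m1 by (auto simp: dyadic_block_def)
  next
    case (Suc j)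
    then have "\<not> inorm \<xi> < 2 ^ (j + 1)" unfolding m_def using not_less_Least[of j] by (metis Suc lessI m_def)
    then show ?thesis using m1 Suc by (auto simp: dyadic_block_def intro!: exI[of _ m])
  qed
qed

lemma dyadic_block_disj: "\<xi> \<in> dyadic_block m \<Longrightarrow> \<xi> \<in> dyadic_block m' \<Longrightarrow> m = m'"
proof (rule ccontr)
  assume a: "\<xi> \<in> dyadic_block m" "\<xi> \<in> dyadic_block m'" "m \<noteq> m'"
  have *: False if "\<xi> \<in> dyadic_block k" "\<xi> \<in> dyadic_block k'" "k < k'" for k k'
  proof -
    have "inorm \<xi> < 2^(k+1)" "2^k' \<le> inorm \<xi>" using that by (auto simp: dyadic_block_def)
    moreover have "(2::real)^(k+1) \<le> 2^k'" using that(3) by (intro power_increasing) auto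
    ultimately show False by simp
  qed
  show False using a *[of m m'] *[of m' m] by (cases "m < m'") auto
qed

definition blk :: "int^'n \<Rightarrow> nat" where "blk \<xi> = (THE m. \<xi> \<in> dyadic_block m)"

lemma blk_mem: "\<xi> \<in> dyadic_block (blk \<xi>)"
  unfolding blk_def
proof (rule theI')
  show "\<exists>!m. \<xi> \<in> dyadic_block m" using dyadic_block_ex[of \<xi>] dyadic_block_disj by blast
qed

lemma blk_eq: "\<xi> \<in> dyadic_block m \<Longrightarrow> blk \<xi> = m"
  using blk_mem dyadic_block_disj by blast

lemma dyadic_block_blk: "dyadic_block m = {\<xi>. blk \<xi> = m}"
  using blk_mem blk_eq by blast

lemma jbracket_ge1: "1 \<le> jbracket \<xi>"
  unfolding jbracket_def by simp

lemma inorm_nonneg: "0 \<le> inorm \<xi>" unfolding inorm_def by (simp add: sum_nonneg)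

lemma block_jbracket: "\<xi> \<in> dyadic_block m \<Longrightarrow> 2^m \<le> 2 * jbracket \<xi>"
proof -
  assume a: "\<xi> \<in> dyadic_block m"
  have ij: "inorm \<xi> \<le> jbracket \<xi>" unfolding jbracket_def
    using real_sqrt_le_mono[of "(inorm \<xi>)^2" "1 + (inorm \<xi>)^2"] inorm_nonneg[of \<xi>] by simp
  show ?thesis
  proof (cases m)
    case 0 then show ?thesis using jbracket_ge1[of \<xi>] by simp
  next
    case (Suc j) then have "2^m \<le> inorm \<xi>" using a by (simp add: dyadic_block_def)
    then show ?thesis using ij jbracket_ge1[of \<xi>] by simp
  qed
qed

definition ballN :: "nat \<Rightarrow> (int^'n) set" where "ballN M = (\<Union>m<M. dyadic_block m)"

lemma finite_ballN[simp]: "finite (ballN M)" unfolding ballN_def by auto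

lemma sum_ballN: "(\<Sum>m<M. \<Sum>\<xi>\<in>dyadic_block m \<inter> S. g \<xi>) = (\<Sum>\<xi>\<in>ballN M \<inter> S. g \<xi>)"
proof -
  have e: "ballN M \<inter> S = (\<Union>m\<in>{..<M}. dyadic_block m \<inter> S)" unfolding ballN_def by auto
  have "(\<Sum>\<xi>\<in>(\<Union>m\<in>{..<M}. dyadic_block m \<inter> S). g \<xi>) = (\<Sum>m<M. \<Sum>\<xi>\<in>dyadic_block m \<inter> S. g \<xi>)"
    by (rule sum.UNION_disjoint) (use dyadic_block_disj in auto)
  then show ?thesis unfolding e by simp
qed

lemma blocks_sums:
  fixes g :: "int^'n \<Rightarrow> 'b::banach"
  assumes "g summable_on S"
  shows "(\<lambda>m. \<Sum>\<xi>\<in>dyadic_block m \<inter> S. g \<xi>) sums (infsum g S)"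
  unfolding sums_def sum_ballN
proof (rule has_sum_exhaust[where S=S])
  show "(g has_sum infsum g S) S" using assms by simp
  show "finite (ballN N \<inter> S)" for N by simp
  show "ballN N \<inter> S \<subseteq> S" for N by auto
  fix x assume "x \<in> S"
  show "eventually (\<lambda>N. x \<in> ballN N \<inter> S) sequentially"
    using eventually_ge_at_top[of "Suc (blk x)"]
    by eventually_elim (use \<open>x \<in> S\<close> blk_mem in \<open>auto simp: ballN_def intro!: bexI[of _ "blk x"]\<close>)
qed

lemma summable_from_blocks:
  fixes g :: "int^'n \<Rightarrow> real"
  assumes g0: "\<And>x. 0 \<le> g x" and sm: "summable (\<lambda>m. \<Sum>\<xi>\<in>dyadic_block m. g \<xi>)"
  shows "g summable_on UNIV"
proof (rule nonneg_bdd_above_summable_on)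
  show "0 \<le> g x" for x by (rule g0)
  show "bdd_above (sum g ` {F. F \<subseteq> UNIV \<and> finite F})"
  proof (rule bdd_aboveI2)
    fix F :: "(int^'n) set" assume "F \<in> {F. F \<subseteq> UNIV \<and> finite F}"
    then have F: "finite F" by auto
    define M where "M = Suc (Max (insert 0 (blk ` F)))"
    have "F \<subseteq> ballN M"
    proof
      fix x assume "x \<in> F"
      then have "blk x \<le> Max (insert 0 (blk ` F))" using F by (intro Max_ge) auto
      then show "x \<in> ballN M" using blk_mem[of x] by (auto simp: ballN_def M_def less_Suc_eq_le)
    qed
    then have "sum g F \<le> sum g (ballN M)" by (intro sum_mono2) (auto simp: g0)
    also have "\<dots> = (\<Sum>m<M. \<Sum>\<xi>\<in>dyadic_block m. g \<xi>)" using sum_ballN[where M=M and S=UNIV and g=g] by simp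
    also have "\<dots> \<le> (\<Sum>m. \<Sum>\<xi>\<in>dyadic_block m. g \<xi>)"
      by (rule sum_le_suminf[OF sm]) (auto intro!: sum_nonneg g0)
    finally show "sum g F \<le> (\<Sum>m. \<Sum>\<xi>\<in>dyadic_block m. g \<xi>)" .
  qed
qed

lemma card_dyadic_block: "real (card (dyadic_block k :: (int^'n) set)) \<le> 2 powr ((real k + 3) * real CARD('n))"
proof -
  have "card (dyadic_block k :: (int^'n) set) \<le> card {\<xi>::int^'n. \<forall>i. \<bar>\<xi>$i\<bar> \<le> 2^(k+1)}"
    by (rule card_mono[OF finite_int_box dyadic_block_sub_box])
  also have "\<dots> \<le> (nat (2*2^(k+1)+1)) ^ CARD('n)" by (rule card_int_box)
  finally have "real (card (dyadic_block k :: (int^'n) set)) \<le> real (nat (2*2^(k+1)+1)) ^ CARD('n)"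
    by (metis of_nat_le_iff of_nat_power)
  also have "\<dots> \<le> (2^(k+3)) ^ CARD('n)"
  proof (rule power_mono)
    have "(2::int)*2^(k+1)+1 \<le> 2^(k+3)" by (simp add: power_add) (use one_le_power[of "2::int" k] in linarith)
    then have "real (nat (2*2^(k+1)+1)) \<le> real (nat (2^(k+3)))" by (metis nat_mono of_nat_le_iff)
    then show "real (nat (2*2^(k+1)+1)) \<le> 2^(k+3)" by (simp add: nat_power_eq)
  qed auto
  also have "\<dots> = 2 powr ((real k + 3) * real CARD('n))"
  proof -
    have "((2::real)^(k+3)) ^ CARD('n) = 2 ^ ((k+3) * CARD('n))" by (simp add: power_mult)
    also have "\<dots> = 2 powr (real ((k+3) * CARD('n)))" by (rule powr_realpow[symmetric]) simp
    finally show ?thesis by simp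
  qed
  finally show ?thesis .
qed

lemma a_abs_summable:
  fixes a :: "int^'n \<Rightarrow> complex"
  assumes A: "\<forall>\<xi>. norm (a \<xi>) \<le> C * jbracket \<xi> powr m" and mn: "m < - real CARD('n)"
  shows "(\<lambda>\<xi>. norm (a \<xi>)) summable_on UNIV"
proof (rule summable_from_blocks)
  show "0 \<le> norm (a x)" for x by simp
  have C0: "0 \<le> C"
  proof -
    have "norm (a 0) \<le> C * jbracket (0::int^'n) powr m" using A by blast
    then have "0 \<le> C * jbracket (0::int^'n) powr m" using norm_ge_zero[of "a 0"] by linarith
    moreover have "0 < jbracket (0::int^'n) powr m" using jbracket_ge1[of "0::int^'n"] by simp
    ultimately show ?thesis by (simp add: zero_le_mult_iff)
  qed
  define r where "r = (2::real) powr (m + real CARD('n))"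
  have r: "0 \<le> r" "r < 1" unfolding r_def using mn by (auto intro!: powr_less_one)
  have bnd: "(\<Sum>\<xi>\<in>dyadic_block k. norm (a \<xi>)) \<le> C * 2 powr (3 * real CARD('n) - m) * r ^ k" for k
  proof -
    have "norm (a \<xi>) \<le> C * 2 powr ((real k - 1) * m)" if "\<xi> \<in> dyadic_block k" for \<xi>
    proof -
      have "2 powr (real k - 1) \<le> jbracket \<xi>"
        using block_jbracket[OF that] by (simp add: powr_diff powr_realpow)
      then have "jbracket \<xi> powr m \<le> (2 powr (real k - 1)) powr m"
        using mn by (intro powr_mono2') auto
      also have "\<dots> = 2 powr ((real k - 1) * m)" by (simp add: powr_powr)
      finally have "jbracket \<xi> powr m \<le> 2 powr ((real k - 1) * m)" .
      then have "C * jbracket \<xi> powr m \<le> C * 2 powr ((real k - 1) * m)" using C0 by (rule mult_left_mono)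
      then show ?thesis using A by (meson order_trans)
    qed
    then have "(\<Sum>\<xi>\<in>dyadic_block k. norm (a \<xi>)) \<le> real (card (dyadic_block k :: (int^'n) set)) * (C * 2 powr ((real k - 1) * m))"
      using sum_bounded_above[of "dyadic_block k" "\<lambda>\<xi>. norm (a \<xi>)"] by auto
    also have "\<dots> \<le> 2 powr ((real k + 3) * real CARD('n)) * (C * 2 powr ((real k - 1) * m))"
      using C0 by (intro mult_right_mono card_dyadic_block) auto
    also have "\<dots> = C * 2 powr (3 * real CARD('n) - m) * r ^ k"
    proof -
      have "r ^ k = 2 powr ((m + real CARD('n)) * real k)"
        unfolding r_def by (subst powr_realpow[symmetric]) (simp_all add: powr_powr)
      then have "C * 2 powr (3 * real CARD('n) - m) * r ^ k = C * 2 powr (3 * real CARD('n) - m + (m + real CARD('n)) * real k)"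
        by (simp add: powr_add)
      also have "3 * real CARD('n) - m + (m + real CARD('n)) * real k = (real k + 3) * real CARD('n) + (real k - 1) * m"
        by (simp add: algebra_simps)
      finally show ?thesis by (simp add: powr_add mult_ac) metis
    qed
    finally show ?thesis .
  qed
  show "summable (\<lambda>k. \<Sum>\<xi>\<in>dyadic_block k. norm (a \<xi>))"
    by (rule summable_comparison_test[where g="\<lambda>k. C * 2 powr (3 * real CARD('n) - m) * r ^ k"])
       (use bnd r in \<open>auto intro!: summable_mult summable_geometric exI[of _ 0] simp: sum_nonneg\<close>)
qed

definition bnb :: "real \<Rightarrow> real \<Rightarrow> (int^'n \<Rightarrow> complex) \<Rightarrow> nat \<Rightarrow> real" where
  "bnb w p c m = 2 powr (real m * w) * torus_Lp_norm p (trig_block m c :: real^'n \<Rightarrow> complex)"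

lemma Lp_nonneg: "0 \<le> torus_Lp_norm p f" unfolding torus_Lp_norm_def by simp

lemma bnb_nonneg: "0 \<le> bnb w p c m" unfolding bnb_def by (simp add: Lp_nonneg)

lemma bt_eq: "besov_term w p 2 c m = (bnb w p c m)^2"
  unfolding besov_term_def bnb_def[symmetric] by (rule powr_numeral[OF bnb_nonneg])

lemma bs_iff: "c \<in> besov_space w p 2 \<longleftrightarrow> summable (\<lambda>m. (bnb w p c m)^2)"
  unfolding besov_space_def bt_eq by simp

lemma bn_eq: "c \<in> besov_space w p 2 \<Longrightarrow> besov_norm w p 2 c = sqrt (\<Sum>m. (bnb w p c m)^2)"
  unfolding besov_norm_def bt_eq bs_iff by (subst powr_half_sqrt[symmetric]) (auto intro: suminf_nonneg)

lemma bn_nonneg: "0 \<le> besov_norm w p q c" unfolding besov_norm_def by simp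

lemma bnb_le_bn: "c \<in> besov_space w p 2 \<Longrightarrow> bnb w p c m \<le> besov_norm w p 2 c"
proof -
  assume c: "c \<in> besov_space w p 2"
  then have sm: "summable (\<lambda>m. (bnb w p c m)^2)" by (simp add: bs_iff)
  have "(bnb w p c m)^2 \<le> (\<Sum>m. (bnb w p c m)^2)"
    using sum_le_suminf[OF sm, of "{m}"] by simp
  then have "sqrt ((bnb w p c m)^2) \<le> sqrt (\<Sum>m. (bnb w p c m)^2)" by (rule real_sqrt_le_mono)
  then show ?thesis using bn_eq[OF c] bnb_nonneg[of w p c m] by simp
qed

lemma coeff_besov:
  assumes p: "1 < p" and c: "c \<in> besov_space w p 2"
  shows "norm (c \<xi>) * 2 powr (real (blk \<xi>) * w) \<le> besov_norm w p 2 c"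
proof -
  have "norm (c \<xi>) * 2 powr (real (blk \<xi>) * w) \<le> bnb w p c (blk \<xi>)"
    unfolding bnb_def using coeff_bound[OF p blk_mem, of c \<xi>] by (simp add: mult.commute)
  also have "\<dots> \<le> besov_norm w p 2 c" by (rule bnb_le_bn[OF c])
  finally show ?thesis .
qed

lemma besov_le:
  assumes le: "\<And>m. bnb w p d m \<le> t m" and t0: "\<And>m. 0 \<le> t m" and st: "summable t"
  shows "d \<in> besov_space w p 2" "besov_norm w p 2 d \<le> suminf t"
proof -
  define T where "T = suminf t"
  have tT: "t m \<le> T" for m unfolding T_def using sum_le_suminf[OF st, of "{m}"] t0 by simp
  have T0: "0 \<le> T" using tT t0 order_trans by blast
  have sq: "(bnb w p d m)^2 \<le> T * t m" for m
  proof -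
    have "(bnb w p d m)^2 \<le> (t m)^2" using le bnb_nonneg by (intro power_mono) auto
    also have "\<dots> \<le> T * t m" using tT t0 by (simp add: power2_eq_square mult_right_mono)
    finally show ?thesis .
  qed
  have sT: "summable (\<lambda>m. T * t m)" using st by (rule summable_mult)
  have sm: "summable (\<lambda>m. (bnb w p d m)^2)"
    by (rule summable_comparison_test[OF _ sT]) (use sq in auto)
  then show "d \<in> besov_space w p 2" by (simp add: bs_iff)
  have "(\<Sum>m. (bnb w p d m)^2) \<le> (\<Sum>m. T * t m)" by (rule suminf_le[OF sq sm sT])
  also have "\<dots> = T^2" using suminf_mult[OF st, of T] by (simp add: T_def power2_eq_square)
  finally have "sqrt (\<Sum>m. (bnb w p d m)^2) \<le> sqrt (T^2)" by (rule real_sqrt_le_mono)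
  then show "besov_norm w p 2 d \<le> suminf t" 
    using bn_eq[OF \<open>d \<in> besov_space w p 2\<close>] T0 by (simp add: T_def)
qed

lemma Lp_block_le:
  assumes p: "0 < p"
  shows "torus_Lp_norm p (trig_block m d :: real^'n \<Rightarrow> complex) \<le> (\<Sum>\<xi>\<in>dyadic_block m. norm (d \<xi>))"
proof (rule Lp_le_const[OF p cont_trig_block])
  fix x :: "real^'n"
  show "norm (trig_block m d x) \<le> (\<Sum>\<xi>\<in>dyadic_block m. norm (d \<xi>))"
    unfolding trig_block_def
    by (rule order_trans[OF norm_sum]) (simp add: norm_mult)
qed (simp add: sum_nonneg)

lemma Lp_scale:
  assumes p: "0 < p"
  shows "torus_Lp_norm p (\<lambda>x. s * f x) = norm s * torus_Lp_norm p f"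
proof -
  have "(\<lambda>x. norm (s * f x) powr p) = (\<lambda>x. norm s powr p *\<^sub>R norm (f x) powr p)"
    by (simp add: norm_mult powr_mult)
  then have "integral (cbox 0 One) (\<lambda>x. norm (s * f x) powr p) = norm s powr p * integral (cbox 0 One) (\<lambda>x. norm (f x) powr p)"
    by simp
  moreover have "0 \<le> integral (cbox 0 One) (\<lambda>x. norm (f x) powr p) \<or> \<not> 0 \<le> integral (cbox 0 One) (\<lambda>x. norm (f x) powr p)" by simp
  ultimately show ?thesis unfolding torus_Lp_norm_def using p
    by (simp add: powr_mult powr_powr)
qed

lemma trig_block_scale: "trig_block m (\<lambda>\<xi>. s * c \<xi>) x = s * trig_block m c x"
  unfolding trig_block_def by (simp add: sum_distrib_left mult_ac)

lemma bnb_scale: "0 < p \<Longrightarrow> bnb w p (\<lambda>\<xi>. s * c \<xi>) m = norm s * bnb w p c m"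
  unfolding bnb_def trig_block_scale by (simp add: Lp_scale[where f="trig_block m c"])

lemma bs_scale: "0 < p \<Longrightarrow> c \<in> besov_space w p 2 \<Longrightarrow> (\<lambda>\<xi>. s * c \<xi>) \<in> besov_space w p 2"
  unfolding bs_iff bnb_scale by (simp add: power_mult_distrib summable_mult)

lemma bn_scale: "0 < p \<Longrightarrow> c \<in> besov_space w p 2 \<Longrightarrow> besov_norm w p 2 (\<lambda>\<xi>. s * c \<xi>) = norm s * besov_norm w p 2 c"
  using bs_scale[of p c w s] 
  by (simp add: bn_eq bnb_scale power_mult_distrib suminf_mult bs_iff real_sqrt_mult)

lemma Lp_add:
  assumes p: "1 < p" and cf: "continuous_on (cbox 0 One) f" and cg: "continuous_on (cbox 0 One) g"
  shows "torus_Lp_norm p (\<lambda>x::real^'n. f x + g x) \<le> 4 * (torus_Lp_norm p f + torus_Lp_norm p g)"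
proof -
  define A where "A = integral (cbox 0 One) (\<lambda>x::real^'n. norm (f x) powr p)"
  define B where "B = integral (cbox 0 One) (\<lambda>x::real^'n. norm (g x) powr p)"
  have cif: "continuous_on (cbox 0 One) (\<lambda>x. norm (f x) powr p)"
    using p by (intro continuous_on_powr' continuous_intros cf) auto
  have cig: "continuous_on (cbox 0 One) (\<lambda>x. norm (g x) powr p)"
    using p by (intro continuous_on_powr' continuous_intros cg) auto
  have cifg: "continuous_on (cbox 0 One) (\<lambda>x. norm (f x + g x) powr p)"
    using p by (intro continuous_on_powr' continuous_intros cf cg) auto
  have A0: "0 \<le> A" unfolding A_def by (rule integral_nonneg) (auto intro!: integrable_continuous cif)
  have B0: "0 \<le> B" unfolding B_def by (rule integral_nonneg) (auto intro!: integrable_continuous cig)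
  have pw: "norm (f x + g x) powr p \<le> 2 powr p * (norm (f x) powr p + norm (g x) powr p)" for x
  proof -
    have "norm (f x + g x) \<le> 2 * max (norm (f x)) (norm (g x))"
      using norm_triangle_ineq[of "f x" "g x"] by linarith
    then have "norm (f x + g x) powr p \<le> (2 * max (norm (f x)) (norm (g x))) powr p"
      using p by (intro powr_mono2) auto
    also have "\<dots> = 2 powr p * max (norm (f x)) (norm (g x)) powr p" by (simp add: powr_mult)
    also have "max (norm (f x)) (norm (g x)) powr p \<le> norm (f x) powr p + norm (g x) powr p"
      by (simp add: max_def)
    finally show ?thesis by simp
  qed
  have "integral (cbox 0 One) (\<lambda>x::real^'n. norm (f x + g x) powr p) \<le>
      integral (cbox 0 One) (\<lambda>x::real^'n. 2 powr p * (norm (f x) powr p + norm (g x) powr p))"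
    by (rule integral_le) (auto intro!: integrable_continuous cif cig cifg continuous_intros pw)
  also have "\<dots> = 2 powr p * (A + B)" unfolding A_def B_def
    by (subst integral_mult[symmetric]) (auto intro!: integrable_continuous cif cig continuous_intros integral_add)
  finally have I: "integral (cbox 0 One) (\<lambda>x::real^'n. norm (f x + g x) powr p) \<le> 2 powr p * (A + B)" .
  have "torus_Lp_norm p (\<lambda>x::real^'n. f x + g x) \<le> (2 powr p * (A + B)) powr (1/p)"
    unfolding torus_Lp_norm_def using p I
    by (intro powr_mono2) (auto intro!: integral_nonneg integrable_continuous cifg)
  also have "\<dots> = 2 * (A + B) powr (1/p)" using p A0 B0 by (simp add: powr_mult powr_powr)
  also have "(A + B) powr (1/p) \<le> 2 * (torus_Lp_norm p f + torus_Lp_norm p g)"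
  proof -
    have two: "(2::real) powr (1/p) \<le> 2" using p powr_mono[of "1/p" 1 2] by simp
    have "(A + B) powr (1/p) \<le> (2 * max A B) powr (1/p)" using A0 B0 p by (intro powr_mono2) auto
    also have "\<dots> = 2 powr (1/p) * max A B powr (1/p)" by (simp add: powr_mult)
    also have "\<dots> \<le> 2 * max A B powr (1/p)" using two by (intro mult_right_mono) auto
    also have "max A B powr (1/p) \<le> A powr (1/p) + B powr (1/p)" by (simp add: max_def)
    finally show ?thesis unfolding torus_Lp_norm_def A_def B_def by simp
  qed
  finally show ?thesis by simp
qed

lemma trig_block_add: "trig_block m (\<lambda>\<xi>. c \<xi> + d \<xi>) x = trig_block m c x + trig_block m d x"
  unfolding trig_block_def by (simp add: sum.distrib distrib_left)

lemma bnb_add: fixes c d :: "int^'n \<Rightarrow> complex" shows "1 < p \<Longrightarrow> bnb w p (\<lambda>\<xi>. c \<xi> + d \<xi>) m \<le> 4 * (bnb w p c m + bnb w p d m)"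
proof -
  assume p: "1 < p"
  have "torus_Lp_norm p (trig_block m (\<lambda>\<xi>. c \<xi> + d \<xi>) :: real^'n \<Rightarrow> complex) \<le> 4 * (torus_Lp_norm p (trig_block m c :: real^'n \<Rightarrow> complex) + torus_Lp_norm p (trig_block m d :: real^'n \<Rightarrow> complex))"
    unfolding trig_block_add[abs_def] by (rule Lp_add[OF p cont_trig_block cont_trig_block])
  then have "2 powr (real m * w) * torus_Lp_norm p (trig_block m (\<lambda>\<xi>. c \<xi> + d \<xi>) :: real^'n \<Rightarrow> complex) \<le> 2 powr (real m * w) * (4 * (torus_Lp_norm p (trig_block m c :: real^'n \<Rightarrow> complex) + torus_Lp_norm p (trig_block m d :: real^'n \<Rightarrow> complex)))"
    by (rule mult_left_mono) simp
  then show ?thesis unfolding bnb_def by (simp add: algebra_simps)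
qed

lemma bs_add:
  assumes p: "1 < p" and c: "c \<in> besov_space w p 2" and d: "d \<in> besov_space w p 2"
  shows "(\<lambda>\<xi>. c \<xi> + d \<xi>) \<in> besov_space w p 2"
  unfolding bs_iff
proof (rule summable_comparison_test)
  show "summable (\<lambda>m. 32 * ((bnb w p c m)^2 + (bnb w p d m)^2))"
    using c d by (intro summable_mult summable_add) (auto simp: bs_iff)
  show "\<exists>N. \<forall>m\<ge>N. norm ((bnb w p (\<lambda>\<xi>. c \<xi> + d \<xi>) m)^2) \<le> 32 * ((bnb w p c m)^2 + (bnb w p d m)^2)"
  proof (intro exI allI impI)
    fix m
    have "(bnb w p (\<lambda>\<xi>. c \<xi> + d \<xi>) m)^2 \<le> (4 * (bnb w p c m + bnb w p d m))^2"
      using bnb_add[OF p] bnb_nonneg by (intro power_mono) auto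
    also have "\<dots> \<le> 32 * ((bnb w p c m)^2 + (bnb w p d m)^2)"
    proof -
      have "(4 * (bnb w p c m + bnb w p d m))^2 = 32 * ((bnb w p c m)^2 + (bnb w p d m)^2) - 16 * (bnb w p c m - bnb w p d m)^2"
        by (simp add: power2_eq_square algebra_simps)
      moreover have "0 \<le> (bnb w p c m - bnb w p d m)^2" by simp
      ultimately show ?thesis by linarith
    qed
    finally show "norm ((bnb w p (\<lambda>\<xi>. c \<xi> + d \<xi>) m)^2) \<le> 32 * ((bnb w p c m)^2 + (bnb w p d m)^2)" by simp
  qed
qed

lemma Lp_zero: "0 < p \<Longrightarrow> torus_Lp_norm p (\<lambda>x. 0) = 0"
  unfolding torus_Lp_norm_def by simp

lemma trig_block_zero: "(\<And>\<xi>. \<xi> \<in> dyadic_block m \<Longrightarrow> c \<xi> = 0) \<Longrightarrow> trig_block m c = (\<lambda>x. 0)"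
  unfolding trig_block_def by (auto intro!: ext sum.neutral)

lemma bnb_zero: "0 < p \<Longrightarrow> (\<And>\<xi>. \<xi> \<in> dyadic_block m \<Longrightarrow> c \<xi> = 0) \<Longrightarrow> bnb w p c m = 0"
  unfolding bnb_def by (simp add: trig_block_zero Lp_zero)

lemma zero_in_bs: "0 < p \<Longrightarrow> (\<lambda>\<xi>. 0) \<in> besov_space w p 2"
  unfolding bs_iff by (simp add: bnb_zero)

definition trunc :: "nat \<Rightarrow> (int^'n \<Rightarrow> complex) \<Rightarrow> int^'n \<Rightarrow> complex" where
  "trunc M c = (\<lambda>\<xi>. if blk \<xi> < M then c \<xi> else 0)"
definition tailf :: "nat \<Rightarrow> (int^'n \<Rightarrow> complex) \<Rightarrow> int^'n \<Rightarrow> complex" where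
  "tailf M c = (\<lambda>\<xi>. if blk \<xi> < M then 0 else c \<xi>)"

lemma trig_block_trunc: "trig_block m (trunc M c) = (if m < M then trig_block m c else (\<lambda>x. 0))"
  unfolding trig_block_def trunc_def by (auto intro!: ext sum.cong sum.neutral simp: blk_eq)

lemma trig_block_tailf: "trig_block m (tailf M c) = (if m < M then (\<lambda>x. 0) else trig_block m c)"
  unfolding trig_block_def tailf_def by (auto intro!: ext sum.cong sum.neutral simp: blk_eq)

lemma bnb_trunc: "0 < p \<Longrightarrow> bnb w p (trunc M c) m = (if m < M then bnb w p c m else 0)"
  unfolding bnb_def trig_block_trunc by (simp add: Lp_zero)

lemma bnb_tailf: "0 < p \<Longrightarrow> bnb w p (tailf M c) m = (if m < M then 0 else bnb w p c m)"
  unfolding bnb_def trig_block_tailf by (simp add: Lp_zero)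

lemma trunc_in:
  assumes p: "0 < p" and c: "c \<in> besov_space w p 2"
  shows "trunc M c \<in> besov_space w p 2" "besov_norm w p 2 (trunc M c) \<le> besov_norm w p 2 c"
proof -
  show t: "trunc M c \<in> besov_space w p 2"
    unfolding bs_iff bnb_trunc[OF p] by (rule summable_finite[of "{..<M}"]) auto
  have sc: "summable (\<lambda>m. (bnb w p c m)^2)" using c by (simp add: bs_iff)
  have "(\<Sum>m. (bnb w p (trunc M c) m)^2) \<le> (\<Sum>m. (bnb w p c m)^2)"
    by (rule suminf_le) (use t sc in \<open>auto simp: bnb_trunc[OF p] bs_iff\<close>)
  then show "besov_norm w p 2 (trunc M c) \<le> besov_norm w p 2 c"
    using bn_eq[OF t] bn_eq[OF c] by simp
qed

lemma tailf_in:
  assumes p: "0 < p" and c: "c \<in> besov_space w p 2"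
  shows "tailf M c \<in> besov_space w p 2" "(\<lambda>M. besov_norm w p 2 (tailf M c)) \<longlonglongrightarrow> 0"
proof -
  define b where "b = (\<lambda>m. (bnb w p c m)^2)"
  have sc: "summable b" using c by (simp add: bs_iff b_def)
  have eq: "(\<lambda>m. (bnb w p (tailf M c) m)^2) = (\<lambda>m. b m - (if m \<in> {..<M} then b m else 0))" for M
    by (auto simp: bnb_tailf[OF p] b_def)
  have su: "(\<lambda>m. (bnb w p (tailf M c) m)^2) sums (suminf b - (\<Sum>m<M. b m))" for M
    unfolding eq by (intro sums_diff summable_sums sc sums_If_finite_set) auto
  then show t: "tailf M c \<in> besov_space w p 2" for M unfolding bs_iff by (auto simp: sums_iff)
  have "besov_norm w p 2 (tailf M c) = sqrt (suminf b - (\<Sum>m<M. b m))" for M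
    using bn_eq[OF t] su[of M] by (simp add: sums_iff)
  moreover have "(\<lambda>M. sqrt (suminf b - (\<Sum>m<M. b m))) \<longlonglongrightarrow> sqrt (suminf b - suminf b)"
    by (intro tendsto_intros summable_LIMSEQ sc)
  ultimately show "(\<lambda>M. besov_norm w p 2 (tailf M c)) \<longlonglongrightarrow> 0" by simp
qed

lemma bn_zero: "0 < p \<Longrightarrow> besov_norm w p 2 (\<lambda>\<xi>. 0) = 0"
  using bn_eq[OF zero_in_bs] by (simp add: bnb_zero)

lemma Kle1: "(N::real) \<le> 1 \<Longrightarrow> 0 \<le> N \<Longrightarrow> K * N \<le> \<bar>K\<bar>"
proof -
  assume N: "N \<le> 1" "0 \<le> N"
  have "K * N \<le> \<bar>K\<bar> * N" using N by (intro mult_right_mono) auto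
  also have "\<dots> \<le> \<bar>K\<bar>" using N by (intro mult_left_le) auto
  finally show ?thesis .
qed

lemma dual_bound:
  assumes p: "0 < p" and l: "besov_dual w p 2 l" and c: "c \<in> besov_space w p 2"
  shows "norm (l c) \<le> dual_norm w p 2 l * besov_norm w p 2 c"
proof -
  obtain K where K: "\<And>c. c \<in> besov_space w p 2 \<Longrightarrow> norm (l c) \<le> K * besov_norm w p 2 c"
    using l unfolding besov_dual_def by blast
  have hom: "\<And>s c. c \<in> besov_space w p 2 \<Longrightarrow> l (\<lambda>\<xi>. s * c \<xi>) = s * l c"
    using l unfolding besov_dual_def by blast
  define X where "X = {norm (l c) | c. c \<in> besov_space w p 2 \<and> besov_norm w p 2 c \<le> 1}"
  have bdd: "bdd_above X"
  proof (rule bdd_aboveI)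
    fix x assume "x \<in> X"
    then obtain c where c: "c \<in> besov_space w p 2" "besov_norm w p 2 c \<le> 1" "x = norm (l c)" unfolding X_def by blast
    have "K * besov_norm w p 2 c \<le> \<bar>K\<bar>"
      using c(2) bn_nonneg[of w p 2 c] by (rule Kle1)
    then show "x \<le> \<bar>K\<bar>" using K[OF c(1)] c(3) by simp
  qed
  show ?thesis
  proof (cases "besov_norm w p 2 c = 0")
    case True then show ?thesis using K[OF c] by simp
  next
    case False
    define N where "N = besov_norm w p 2 c"
    have N0: "0 < N" using False bn_nonneg[of w p 2 c] unfolding N_def by simp
    define c' where "c' = (\<lambda>\<xi>. (1/N) * c \<xi>)"
    have c'in: "c' \<in> besov_space w p 2" unfolding c'_def by (rule bs_scale[OF p c])
    have "besov_norm w p 2 c' = 1" unfolding c'_def using bn_scale[OF p c, of "1/N"] N0 by (simp add: N_def norm_divide)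
    then have "norm (l c') \<in> X" unfolding X_def using c'in by auto
    then have "norm (l c') \<le> dual_norm w p 2 l" unfolding dual_norm_def X_def[symmetric] using bdd by (rule cSup_upper)
    moreover have "l c' = (1/N) * l c" unfolding c'_def by (rule hom[OF c])
    ultimately have "norm (l c) / N \<le> dual_norm w p 2 l" using N0 by (simp add: norm_divide)
    then show ?thesis using N0 by (simp add: N_def field_simps)
  qed
qed

lemma dual_nonneg:
  assumes p: "0 < p" and l: "besov_dual w p 2 l"
  shows "0 \<le> dual_norm w p 2 l"
proof -
  obtain K where K: "\<And>c. c \<in> besov_space w p 2 \<Longrightarrow> norm (l c) \<le> K * besov_norm w p 2 c"
    using l unfolding besov_dual_def by blast
  define X where "X = {norm (l c) | c. c \<in> besov_space w p 2 \<and> besov_norm w p 2 c \<le> 1}"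
  have bdd: "bdd_above X"
  proof (rule bdd_aboveI)
    fix x assume "x \<in> X"
    then obtain c where c: "c \<in> besov_space w p 2" "besov_norm w p 2 c \<le> 1" "x = norm (l c)" unfolding X_def by blast
    have "K * besov_norm w p 2 c \<le> \<bar>K\<bar>"
      using c(2) bn_nonneg[of w p 2 c] by (rule Kle1)
    then show "x \<le> \<bar>K\<bar>" using K[OF c(1)] c(3) by simp
  qed
  have "norm (l (\<lambda>\<xi>. 0)) \<in> X" unfolding X_def
    by (rule CollectI, rule exI[of _ "\<lambda>\<xi>. 0"]) (simp add: zero_in_bs[OF p] bn_zero[OF p])
  then have "norm (l (\<lambda>\<xi>. 0)) \<le> Sup X" using bdd by (rule cSup_upper)
  then show ?thesis unfolding dual_norm_def X_def[symmetric] using norm_ge_zero[of "l (\<lambda>\<xi>. 0)"] by linarith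
qed

lemma dual_le:
  assumes p: "0 < p" and B: "\<And>c. c \<in> besov_space w p 2 \<Longrightarrow> besov_norm w p 2 c \<le> 1 \<Longrightarrow> norm (l c) \<le> B"
  shows "dual_norm w p 2 l \<le> B"
  unfolding dual_norm_def
proof (rule cSup_least)
  show "{norm (l c) |c. c \<in> besov_space w p 2 \<and> besov_norm w p 2 c \<le> 1} \<noteq> {}"
  proof -
    have "norm (l (\<lambda>\<xi>. 0)) \<in> {norm (l c) |c. c \<in> besov_space w p 2 \<and> besov_norm w p 2 c \<le> 1}"
      by (rule CollectI, rule exI[of _ "\<lambda>\<xi>. 0"]) (simp add: zero_in_bs[OF p] bn_zero[OF p])
    then show ?thesis by auto
  qed
qed (use B in auto)

definition ind :: "int^'n \<Rightarrow> int^'n \<Rightarrow> complex" where "ind \<eta> = (\<lambda>\<xi>. if \<xi> = \<eta> then 1 else 0)"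

lemma finsupp_in:
  assumes p: "0 < p" and S: "finite S" and c: "\<And>\<xi>. \<xi> \<notin> S \<Longrightarrow> c \<xi> = 0"
  shows "c \<in> besov_space w p 2"
proof -
  define M where "M = Suc (Max (insert 0 (blk ` S)))"
  have "blk \<xi> < M" if "\<xi> \<in> S" for \<xi>
    using that S unfolding M_def by (simp add: le_imp_less_Suc)
  then have "bnb w p c m = 0" if "m \<notin> {..<M}" for m
    using that by (intro bnb_zero[OF p]) (metis blk_eq c lessThan_iff)
  then show ?thesis unfolding bs_iff by (intro summable_finite[of "{..<M}"]) auto
qed

lemma ind_in: "0 < p \<Longrightarrow> ind \<eta> \<in> besov_space w p 2"
  by (rule finsupp_in[of p "{\<eta>}"]) (auto simp: ind_def)

lemma bs_diff: "1 < p \<Longrightarrow> c \<in> besov_space w p 2 \<Longrightarrow> d \<in> besov_space w p 2 \<Longrightarrow> (\<lambda>\<xi>. c \<xi> - d \<xi>) \<in> besov_space w p 2"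
  using bs_add[of p c w "\<lambda>\<xi>. (-1) * d \<xi>"] bs_scale[of p d w "-1"] by simp

lemma bs_sum:
  assumes p: "1 < p" and F: "finite F" and f: "\<And>i. i \<in> F \<Longrightarrow> f i \<in> besov_space w p 2"
  shows "(\<lambda>\<xi>. \<Sum>i\<in>F. f i \<xi>) \<in> besov_space w p 2"
  using F f
proof (induction F rule: finite_induct)
  case empty then show ?case using zero_in_bs[of p w] p by simp
next
  case (insert x F) then show ?case using bs_add[OF p, of "f x" w "\<lambda>\<xi>. \<Sum>i\<in>F. f i \<xi>"] by simp
qed

lemma mult_besov:
  assumes p: "1 < p" and c: "c \<in> besov_space w p 2" and g0: "\<And>\<xi>. 0 \<le> g \<xi>"
    and gs: "g summable_on UNIV" and d: "\<And>\<xi>. norm (d \<xi>) \<le> g \<xi> * norm (c \<xi>)"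
  shows "d \<in> besov_space w p 2" "besov_norm w p 2 d \<le> besov_norm w p 2 c * infsum g UNIV"
proof -
  define t where "t m = besov_norm w p 2 c * (\<Sum>\<xi>\<in>dyadic_block m. g \<xi>)" for m
  have ts: "t sums (besov_norm w p 2 c * infsum g UNIV)"
    unfolding t_def using sums_mult[OF blocks_sums[OF gs]] by simp
  have le: "bnb w p d m \<le> t m" for m
  proof -
    have "bnb w p d m \<le> 2 powr (real m * w) * (\<Sum>\<xi>\<in>dyadic_block m. norm (d \<xi>))"
      unfolding bnb_def using p by (intro mult_left_mono Lp_block_le) auto
    also have "\<dots> \<le> 2 powr (real m * w) * (\<Sum>\<xi>\<in>dyadic_block m. g \<xi> * norm (c \<xi>))"
      by (intro mult_left_mono sum_mono d) auto
    also have "\<dots> = (\<Sum>\<xi>\<in>dyadic_block m. g \<xi> * (norm (c \<xi>) * 2 powr (real (blk \<xi>) * w)))"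
      by (auto simp: sum_distrib_left blk_eq intro!: sum.cong)
    also have "\<dots> \<le> (\<Sum>\<xi>\<in>dyadic_block m. g \<xi> * besov_norm w p 2 c)"
      by (intro sum_mono mult_left_mono coeff_besov[OF p c] g0)
    also have "\<dots> = t m" unfolding t_def by (simp add: sum_distrib_right mult.commute)
    finally show ?thesis .
  qed
  have t0: "0 \<le> t m" for m unfolding t_def by (intro mult_nonneg_nonneg bn_nonneg sum_nonneg g0)
  from besov_le[OF le t0 sums_summable[OF ts]] ts
  show "d \<in> besov_space w p 2" "besov_norm w p 2 d \<le> besov_norm w p 2 c * infsum g UNIV"
    by (auto simp: sums_iff)
qed

lemma ind_norm: fixes \<eta> :: "int^'n" shows "0 < p \<Longrightarrow> besov_norm w p 2 (ind \<eta>) \<le> 2 powr (real (blk \<eta>) * w)"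
proof -
  assume p: "0 < p"
  define t where "t m = (if m = blk \<eta> then 2 powr (real (blk \<eta>) * w) else 0)" for m
  have ts: "t sums 2 powr (real (blk \<eta>) * w)" unfolding t_def by (rule sums_single)
  have le: "bnb w p (ind \<eta>) m \<le> t m" for m
  proof (cases "m = blk \<eta>")
    case True
    have "torus_Lp_norm p (trig_block m (ind \<eta>) :: real^'n \<Rightarrow> complex) \<le> (\<Sum>\<xi>\<in>dyadic_block m. norm (ind \<eta> \<xi>))"
      by (rule Lp_block_le[OF p])
    also have "\<dots> = (\<Sum>\<xi>\<in>dyadic_block m. if \<xi> = \<eta> then 1 else 0)"
      by (intro sum.cong) (auto simp: ind_def)
    also have "\<dots> = 1" using True blk_mem[of \<eta>] by simp
    finally show ?thesis using True unfolding bnb_def t_def by (simp add: mult_left_le)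
  next
    case False
    then have "bnb w p (ind \<eta>) m = 0" by (intro bnb_zero[OF p]) (auto simp: ind_def blk_eq)
    then show ?thesis using False by (simp add: t_def)
  qed
  from besov_le[OF le _ sums_summable[OF ts]] ts show ?thesis by (auto simp: sums_iff t_def)
qed

lemma coeff_besov':
  assumes p: "1 < p" and c: "c \<in> besov_space w p 2"
  shows "norm (c \<xi>) \<le> 2 powr (- (real (blk \<xi>) * w)) * besov_norm w p 2 c"
proof -
  have "norm (c \<xi>) * 2 powr (real (blk \<xi>) * w) \<le> besov_norm w p 2 c" by (rule coeff_besov[OF p c])
  then show ?thesis by (simp add: powr_minus field_simps)
qed

lemma infinite_UNIV_vec: "infinite (UNIV :: (int^'n) set)"
proof
  assume "finite (UNIV :: (int^'n) set)"
  then have "finite (range (vec :: int \<Rightarrow> int^'n))" by (rule finite_subset[rotated]) auto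
  moreover have "inj (vec :: int \<Rightarrow> int^'n)" by (auto simp: inj_def vec_eq_iff)
  ultimately have "finite (UNIV :: int set)" using finite_imageD by blast
  then show False by simp
qed

definition enum :: "nat \<Rightarrow> int^'n" where "enum = from_nat_into UNIV"

lemma bij_enum: "bij (enum :: nat \<Rightarrow> int^'n)"
  unfolding enum_def by (rule bij_betw_from_nat_into[OF countableI_type infinite_UNIV_vec])

lemma summable_enum:
  fixes g :: "int^'n \<Rightarrow> real"
  assumes "g summable_on UNIV"
  shows "(\<lambda>k. g (enum k)) sums infsum g UNIV"
proof -
  have "(g has_sum infsum g UNIV) UNIV" using assms by simp
  then have "((\<lambda>k. g (enum k)) has_sum infsum g UNIV) UNIV"
    using has_sum_reindex_bij_betw[OF bij_enum] by blast
  then show ?thesis by (rule has_sum_imp_sums)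
qed

lemma nuclear_exists:
  fixes a :: "int^'n \<Rightarrow> complex"
  assumes p: "1 < p" and as: "(\<lambda>\<xi>. norm (a \<xi>)) summable_on UNIV"
  shows "nuclear_on w p 2 (fourier_mult a)"
proof -
  have p0: "0 < p" using p by simp
  define l where "l k c = a (enum k) * c (enum k)" for k and c :: "int^'n \<Rightarrow> complex"
  define y where "y k = ind (enum k :: int^'n)" for k
  define P where "P k = 2 powr (real (blk (enum k :: int^'n)) * w)" for k
  have P0: "0 < P k" for k by (simp add: P_def)
  have lb: "norm (l k c) \<le> norm (a (enum k)) * inverse (P k) * besov_norm w p 2 c" if "c \<in> besov_space w p 2" for k c
  proof -
    have "norm (l k c) = norm (a (enum k)) * norm (c (enum k))" by (simp add: l_def norm_mult)
    also have "\<dots> \<le> norm (a (enum k)) * (2 powr (- (real (blk (enum k :: int^'n)) * w)) * besov_norm w p 2 c)"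
      using coeff_besov'[OF p that, of "enum k"] norm_ge_zero by (rule mult_left_mono)
    finally show ?thesis by (simp add: P_def powr_minus mult.assoc)
  qed
  have dual: "besov_dual w p 2 (l k)" for k
    unfolding besov_dual_def
  proof (intro conjI ballI allI)
    show "\<exists>K. \<forall>c\<in>besov_space w p 2. norm (l k c) \<le> K * besov_norm w p 2 c"
      using lb by blast
  qed (auto simp: l_def algebra_simps)
  have dn: "dual_norm w p 2 (l k) \<le> norm (a (enum k)) * inverse (P k)" for k
  proof (rule dual_le[OF p0])
    fix c :: "int^'n \<Rightarrow> complex" assume c: "c \<in> besov_space w p 2" "besov_norm w p 2 c \<le> 1"
    have "norm (l k c) \<le> norm (a (enum k)) * inverse (P k) * besov_norm w p 2 c" by (rule lb[OF c(1)])
    also have "\<dots> \<le> norm (a (enum k)) * inverse (P k) * 1" using c(2) P0[of k] by (intro mult_left_mono) auto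
    finally show "norm (l k c) \<le> norm (a (enum k)) * inverse (P k)" by simp
  qed
  have yn: "besov_norm w p 2 (y k) \<le> P k" for k unfolding y_def P_def by (rule ind_norm[OF p0])
  have prod: "dual_norm w p 2 (l k) * besov_norm w p 2 (y k) \<le> norm (a (enum k))" for k
  proof -
    have "dual_norm w p 2 (l k) * besov_norm w p 2 (y k) \<le> (norm (a (enum k)) * inverse (P k)) * P k"
      by (intro mult_mono dn yn dual_nonneg[OF p0 dual] bn_nonneg) (use P0[of k] in auto)
    also have "\<dots> = norm (a (enum k))" using P0[of k] by simp
    finally show ?thesis .
  qed
  have sumk: "summable (\<lambda>k. dual_norm w p 2 (l k) * besov_norm w p 2 (y k))"
  proof (rule summable_comparison_test[OF _ sums_summable[OF summable_enum[OF as]]])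
    show "\<exists>N. \<forall>k\<ge>N. norm (dual_norm w p 2 (l k) * besov_norm w p 2 (y k)) \<le> norm (a (enum k))"
    proof (intro exI[of _ 0] allI impI)
      fix k :: nat
      have "norm (dual_norm w p 2 (l k) * besov_norm w p 2 (y k)) = dual_norm w p 2 (l k) * besov_norm w p 2 (y k)"
        using dual_nonneg[OF p0 dual, of k] bn_nonneg[of w p 2 "y k"] by simp
      then show "norm (dual_norm w p 2 (l k) * besov_norm w p 2 (y k)) \<le> norm (a (enum k))" using prod[of k] by simp
    qed
  qed
  have conv: "fourier_mult a c \<in> besov_space w p 2 \<and>
        (\<lambda>N. besov_norm w p 2 (\<lambda>\<xi>. fourier_mult a c \<xi> - (\<Sum>k<N. l k c * y k \<xi>))) \<longlonglongrightarrow> 0"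
    if c: "c \<in> besov_space w p 2" for c
  proof
    show "fourier_mult a c \<in> besov_space w p 2"
      by (rule mult_besov(1)[OF p c _ as]) (auto simp: fourier_mult_def norm_mult)
    define F where "F N = (enum ` {..<N} :: (int^'n) set)" for N
    define g where "g N \<xi> = (if \<xi> \<in> F N then 0 else norm (a \<xi>))" for N \<xi>
    have D: "fourier_mult a c \<xi> - (\<Sum>k<N. l k c * y k \<xi>) = (if \<xi> \<in> F N then 0 else a \<xi> * c \<xi>)" for N \<xi>
    proof (cases "\<xi> \<in> F N")
      case True
      then obtain k0 where k0: "k0 < N" "\<xi> = enum k0" unfolding F_def by auto
      have "(\<Sum>k<N. l k c * y k \<xi>) = (\<Sum>k<N. if k = k0 then a \<xi> * c \<xi> else 0)"
        using bij_enum k0 by (intro sum.cong refl) (auto simp: l_def y_def ind_def bij_def inj_def)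
      also have "\<dots> = a \<xi> * c \<xi>" using k0 by simp
      finally show ?thesis using True by (simp add: fourier_mult_def)
    next
      case False
      then have "(\<Sum>k<N. l k c * y k \<xi>) = 0" by (intro sum.neutral) (auto simp: l_def y_def ind_def F_def)
      then show ?thesis using False by (simp add: fourier_mult_def)
    qed
    have finF: "finite (F N)" for N by (simp add: F_def)
    have gs: "g N summable_on UNIV" for N
    proof -
      have "(\<lambda>\<xi>. norm (a \<xi>)) summable_on (UNIV - F N)" by (rule summable_on_subset_banach[OF as]) auto
      then show ?thesis by (subst summable_on_cong_neutral[where T="UNIV - F N" and g="\<lambda>\<xi>. norm (a \<xi>)"]) (auto simp: g_def)
    qed
    have gi: "infsum (g N) UNIV = infsum (\<lambda>\<xi>. norm (a \<xi>)) UNIV - sum (\<lambda>\<xi>. norm (a \<xi>)) (F N)" for N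
    proof -
      have "infsum (g N) UNIV = infsum (\<lambda>\<xi>. norm (a \<xi>)) (UNIV - F N)"
        by (rule infsum_cong_neutral) (auto simp: g_def)
      moreover have "infsum (\<lambda>\<xi>. norm (a \<xi>)) (F N \<union> (UNIV - F N)) = infsum (\<lambda>\<xi>. norm (a \<xi>)) (F N) + infsum (\<lambda>\<xi>. norm (a \<xi>)) (UNIV - F N)"
        by (rule infsum_Un_disjoint) (auto intro: summable_on_subset_banach[OF as] simp: finF)
      ultimately show ?thesis using finF[of N] by simp
    qed
    have Fl: "(\<lambda>N. sum (\<lambda>\<xi>. norm (a \<xi>)) (F N)) \<longlonglongrightarrow> infsum (\<lambda>\<xi>. norm (a \<xi>)) UNIV"
    proof (rule has_sum_exhaust[where S=UNIV])
      show "((\<lambda>\<xi>. norm (a \<xi>)) has_sum infsum (\<lambda>\<xi>. norm (a \<xi>)) UNIV) UNIV" using as by simp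
      show "finite (F N)" for N by (rule finF)
      show "F N \<subseteq> UNIV" for N by simp
      fix x :: "int^'n"
      obtain k where xk: "x = enum k" using bij_enum by (metis bij_pointE)
      show "eventually (\<lambda>N. x \<in> F N) sequentially"
        using eventually_gt_at_top[of k] by (rule eventually_mono) (auto simp: F_def xk)
    qed
    have bnd: "besov_norm w p 2 (\<lambda>\<xi>. fourier_mult a c \<xi> - (\<Sum>k<N. l k c * y k \<xi>)) \<le> besov_norm w p 2 c * infsum (g N) UNIV" for N
      unfolding D by (rule mult_besov(2)[OF p c _ gs]) (auto simp: g_def norm_mult)
    have "(\<lambda>N. infsum (\<lambda>\<xi>. norm (a \<xi>)) UNIV - sum (\<lambda>\<xi>. norm (a \<xi>)) (F N)) \<longlonglongrightarrow> infsum (\<lambda>\<xi>. norm (a \<xi>)) UNIV - infsum (\<lambda>\<xi>. norm (a \<xi>)) UNIV"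
      by (intro tendsto_diff tendsto_const Fl)
    then have "(\<lambda>N. infsum (g N) UNIV) \<longlonglongrightarrow> 0" unfolding gi by simp
    then have lim: "(\<lambda>N. besov_norm w p 2 c * infsum (g N) UNIV) \<longlonglongrightarrow> besov_norm w p 2 c * 0"
      by (intro tendsto_mult tendsto_const)
    show "(\<lambda>N. besov_norm w p 2 (\<lambda>\<xi>. fourier_mult a c \<xi> - (\<Sum>k<N. l k c * y k \<xi>))) \<longlonglongrightarrow> 0"
    proof (rule tendsto_sandwich[OF _ _ tendsto_const])
      show "\<forall>\<^sub>F N in sequentially. 0 \<le> besov_norm w p 2 (\<lambda>\<xi>. fourier_mult a c \<xi> - (\<Sum>k<N. l k c * y k \<xi>))"
        by (intro always_eventually allI bn_nonneg)
      show "\<forall>\<^sub>F N in sequentially. besov_norm w p 2 (\<lambda>\<xi>. fourier_mult a c \<xi> - (\<Sum>k<N. l k c * y k \<xi>)) \<le> besov_norm w p 2 c * infsum (g N) UNIV"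
        by (intro always_eventually allI bnd)
      show "(\<lambda>N. besov_norm w p 2 c * infsum (g N) UNIV) \<longlonglongrightarrow> 0" using lim by simp
    qed
  qed
  have "nuclear_rep w p 2 (fourier_mult a) l y"
    unfolding nuclear_rep_def using dual sumk conv ind_in[OF p0] by (auto simp: y_def)
  then show ?thesis unfolding nuclear_on_def by blast
qed

lemma ballN_iff: "\<xi> \<in> ballN M \<longleftrightarrow> blk \<xi> < M"
proof -
  have "\<xi> \<in> ballN M \<longleftrightarrow> (\<exists>m<M. \<xi> \<in> dyadic_block m)" by (auto simp: ballN_def)
  also have "\<dots> \<longleftrightarrow> blk \<xi> < M" using blk_mem[of \<xi>] blk_eq[of \<xi>] by metis
  finally show ?thesis .
qed

lemma dual_add: "besov_dual w p q l \<Longrightarrow> c \<in> besov_space w p q \<Longrightarrow> d \<in> besov_space w p q \<Longrightarrow> l (\<lambda>\<xi>. c \<xi> + d \<xi>) = l c + l d"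
  unfolding besov_dual_def by blast

lemma dual_scale: "besov_dual w p q l \<Longrightarrow> c \<in> besov_space w p q \<Longrightarrow> l (\<lambda>\<xi>. s * c \<xi>) = s * l c"
  unfolding besov_dual_def by blast

lemma dual_sum:
  assumes p: "1 < p" and l: "besov_dual w p 2 l" and F: "finite F" and f: "\<And>i. i \<in> F \<Longrightarrow> f i \<in> besov_space w p 2"
  shows "l (\<lambda>\<xi>. \<Sum>i\<in>F. f i \<xi>) = (\<Sum>i\<in>F. l (f i))"
  using F f
proof (induction F rule: finite_induct)
  case empty
  have "l (\<lambda>\<xi>. 0 * 0) = 0 * l (\<lambda>\<xi>. 0)" by (rule dual_scale[OF l zero_in_bs]) (use p in simp)
  then show ?case by simp
next
  case (insert x F)
  have "l (\<lambda>\<xi>. \<Sum>i\<in>insert x F. f i \<xi>) = l (\<lambda>\<xi>. f x \<xi> + (\<Sum>i\<in>F. f i \<xi>))" using insert by simp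
  also have "\<dots> = l (f x) + l (\<lambda>\<xi>. \<Sum>i\<in>F. f i \<xi>)"
    using insert by (intro dual_add[OF l] bs_sum[OF p]) auto
  finally show ?case using insert by simp
qed

lemma trace_unique:
  fixes a :: "int^'n \<Rightarrow> complex"
  assumes p: "1 < p" and as: "(\<lambda>\<xi>. norm (a \<xi>)) summable_on UNIV" and nr: "nuclear_rep w p 2 (fourier_mult a) l y"
  shows "nuclear_trace_of l y = infsum a UNIV"
proof -
  have p0: "0 < p" using p by simp
  have dual: "\<And>k. besov_dual w p 2 (l k)" and yin: "\<And>k. y k \<in> besov_space w p 2"
    and sm: "summable (\<lambda>k. dual_norm w p 2 (l k) * besov_norm w p 2 (y k))"
    and conv: "\<And>c. c \<in> besov_space w p 2 \<Longrightarrow> fourier_mult a c \<in> besov_space w p 2 \<and>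
        (\<lambda>N. besov_norm w p 2 (\<lambda>\<xi>. fourier_mult a c \<xi> - (\<Sum>k<N. l k c * y k \<xi>))) \<longlonglongrightarrow> 0"
    using nr unfolding nuclear_rep_def by auto
  have asum: "a summable_on UNIV" using as summable_on_iff_abs_summable_on_complex by blast
  have step1: "(\<lambda>N. \<Sum>k<N. l k (ind \<xi>) * y k \<xi>) \<longlonglongrightarrow> a \<xi>" for \<xi>
  proof -
    define D where "D N = (\<lambda>\<eta>. fourier_mult a (ind \<xi>) \<eta> - (\<Sum>k<N. l k (ind \<xi>) * y k \<eta>))" for N
    have Din: "D N \<in> besov_space w p 2" for N
      unfolding D_def using conv[OF ind_in[OF p0]]
      by (intro bs_diff[OF p] bs_sum[OF p] bs_scale[OF p0] yin) auto
    have Dlim: "(\<lambda>N. besov_norm w p 2 (D N)) \<longlonglongrightarrow> 0" unfolding D_def using conv[OF ind_in[OF p0]] by blast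
    have "(\<lambda>N. D N \<xi>) \<longlonglongrightarrow> 0"
    proof (rule Lim_null_comparison)
      show "\<forall>\<^sub>F N in sequentially. norm (D N \<xi>) \<le> 2 powr (- (real (blk \<xi>) * w)) * besov_norm w p 2 (D N)"
        by (intro always_eventually allI coeff_besov'[OF p Din])
      show "(\<lambda>N. 2 powr (- (real (blk \<xi>) * w)) * besov_norm w p 2 (D N)) \<longlonglongrightarrow> 0"
        using tendsto_mult[OF tendsto_const Dlim, of "2 powr (- (real (blk \<xi>) * w))"] by simp
    qed
    moreover have "D N \<xi> = a \<xi> - (\<Sum>k<N. l k (ind \<xi>) * y k \<xi>)" for N
      by (simp add: D_def fourier_mult_def ind_def)
    ultimately have "(\<lambda>N. a \<xi> - (\<Sum>k<N. l k (ind \<xi>) * y k \<xi>)) \<longlonglongrightarrow> 0" by simp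
    then have "(\<lambda>N. a \<xi> - (a \<xi> - (\<Sum>k<N. l k (ind \<xi>) * y k \<xi>))) \<longlonglongrightarrow> a \<xi> - 0"
      by (intro tendsto_diff tendsto_const)
    then show ?thesis by simp
  qed
  have lbound: "norm (l k c) \<le> dual_norm w p 2 (l k) * besov_norm w p 2 c" if "c \<in> besov_space w p 2" for k c
    by (rule dual_bound[OF p0 dual that])
  have trbound: "norm (l k (trunc M (y k))) \<le> dual_norm w p 2 (l k) * besov_norm w p 2 (y k)" for k M
  proof -
    have "norm (l k (trunc M (y k))) \<le> dual_norm w p 2 (l k) * besov_norm w p 2 (trunc M (y k))"
      by (rule lbound[OF trunc_in(1)[OF p0 yin]])
    also have "\<dots> \<le> dual_norm w p 2 (l k) * besov_norm w p 2 (y k)"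
      by (intro mult_left_mono trunc_in(2)[OF p0 yin] dual_nonneg[OF p0 dual])
    finally show ?thesis .
  qed
  have step2: "(\<Sum>\<xi>\<in>ballN M. a \<xi>) = (\<Sum>k. l k (trunc M (y k)))" for M
  proof -
    have tr: "trunc M (y k) = (\<lambda>\<eta>. \<Sum>\<xi>\<in>ballN M. y k \<xi> * ind \<xi> \<eta>)" for k
    proof
      fix \<eta> :: "int^'n"
      have "(\<Sum>\<xi>\<in>ballN M. y k \<xi> * ind \<xi> \<eta>) = (\<Sum>\<xi>\<in>ballN M. if \<xi> = \<eta> then y k \<eta> else 0)"
        by (intro sum.cong) (auto simp: ind_def)
      also have "\<dots> = (if \<eta> \<in> ballN M then y k \<eta> else 0)" by simp
      also have "\<dots> = trunc M (y k) \<eta>" by (simp add: trunc_def ballN_iff)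
      finally show "trunc M (y k) \<eta> = (\<Sum>\<xi>\<in>ballN M. y k \<xi> * ind \<xi> \<eta>)" by simp
    qed
    have lt: "l k (trunc M (y k)) = (\<Sum>\<xi>\<in>ballN M. l k (ind \<xi>) * y k \<xi>)" for k
    proof -
      have "l k (trunc M (y k)) = (\<Sum>\<xi>\<in>ballN M. l k (\<lambda>\<eta>. y k \<xi> * ind \<xi> \<eta>))"
        unfolding tr by (rule dual_sum[OF p dual]) (auto intro!: bs_scale[OF p0] ind_in[OF p0])
      also have "\<dots> = (\<Sum>\<xi>\<in>ballN M. l k (ind \<xi>) * y k \<xi>)"
        by (intro sum.cong refl) (simp add: dual_scale[OF dual ind_in[OF p0]])
      finally show ?thesis .
    qed
    have "(\<lambda>N. \<Sum>\<xi>\<in>ballN M. \<Sum>k<N. l k (ind \<xi>) * y k \<xi>) \<longlonglongrightarrow> (\<Sum>\<xi>\<in>ballN M. a \<xi>)"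
      by (intro tendsto_sum step1)
    then have L: "(\<lambda>N. \<Sum>k<N. l k (trunc M (y k))) \<longlonglongrightarrow> (\<Sum>\<xi>\<in>ballN M. a \<xi>)"
      unfolding lt by (subst sum.swap) simp
    have "summable (\<lambda>k. norm (l k (trunc M (y k))))"
      by (rule summable_comparison_test[OF _ sm]) (use trbound in \<open>auto intro!: exI[of _ 0]\<close>)
    then have "summable (\<lambda>k. l k (trunc M (y k)))" by (rule summable_norm_cancel)
    from LIMSEQ_unique[OF L summable_LIMSEQ[OF this]] show ?thesis .
  qed
  have klim: "(\<lambda>M. l k (trunc M (y k))) \<longlonglongrightarrow> l k (y k)" for k
  proof -
    have split: "l k (y k) = l k (trunc M (y k)) + l k (tailf M (y k))" for M
    proof -
      have "y k = (\<lambda>\<xi>. trunc M (y k) \<xi> + tailf M (y k) \<xi>)" by (auto simp: trunc_def tailf_def)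
      then have "l k (y k) = l k (\<lambda>\<xi>. trunc M (y k) \<xi> + tailf M (y k) \<xi>)" by simp
      also have "\<dots> = l k (trunc M (y k)) + l k (tailf M (y k))"
        by (rule dual_add[OF dual trunc_in(1)[OF p0 yin] tailf_in(1)[OF p0 yin]])
      finally show ?thesis .
    qed
    have "(\<lambda>M. l k (tailf M (y k))) \<longlonglongrightarrow> 0"
    proof (rule Lim_null_comparison)
      show "\<forall>\<^sub>F M in sequentially. norm (l k (tailf M (y k))) \<le> dual_norm w p 2 (l k) * besov_norm w p 2 (tailf M (y k))"
        by (intro always_eventually allI lbound tailf_in(1)[OF p0 yin])
      show "(\<lambda>M. dual_norm w p 2 (l k) * besov_norm w p 2 (tailf M (y k))) \<longlonglongrightarrow> 0"
        using tendsto_mult[OF tendsto_const tailf_in(2)[OF p0 yin], of "dual_norm w p 2 (l k)" k] by simp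
    qed
    then have "(\<lambda>M. l k (y k) - l k (tailf M (y k))) \<longlonglongrightarrow> l k (y k) - 0" by (intro tendsto_diff tendsto_const)
    moreover have "l k (y k) - l k (tailf M (y k)) = l k (trunc M (y k))" for M using split[of M] by simp
    ultimately show ?thesis by simp
  qed
  have T: "(\<lambda>M. \<Sum>k. l k (trunc M (y k))) \<longlonglongrightarrow> (\<Sum>k. l k (y k))"
  proof -
    have "eventually (\<lambda>M. summable (\<lambda>k. norm (l k (trunc M (y k))))) sequentially \<and>
           summable (\<lambda>k. norm (l k (y k))) \<and>
           ((\<lambda>M. \<Sum>k. l k (trunc M (y k))) \<longlongrightarrow> (\<Sum>k. l k (y k))) sequentially"
    proof (rule tannerys_theorem[OF klim _ sm])
      show "\<forall>\<^sub>F (k, M) in sequentially \<times>\<^sub>F sequentially. norm (l k (trunc M (y k))) \<le> dual_norm w p 2 (l k) * besov_norm w p 2 (y k)"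
        by (intro always_eventually) (auto intro: trbound)
    qed simp
    then show ?thesis by blast
  qed
  have "(\<lambda>M. \<Sum>\<xi>\<in>ballN M. a \<xi>) \<longlonglongrightarrow> infsum a UNIV"
  proof (rule has_sum_exhaust[where S=UNIV])
    show "(a has_sum infsum a UNIV) UNIV" using asum by simp
    show "finite (ballN M)" for M by simp
    show "ballN M \<subseteq> UNIV" for M by simp
    fix x :: "int^'n"
    show "eventually (\<lambda>M. x \<in> ballN M) sequentially"
      using eventually_gt_at_top[of "blk x"] by (rule eventually_mono) (simp add: ballN_iff)
  qed
  then have "(\<lambda>M. \<Sum>k. l k (trunc M (y k))) \<longlonglongrightarrow> infsum a UNIV" unfolding step2 .
  from LIMSEQ_unique[OF T this] show ?thesis unfolding nuclear_trace_of_def .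
qed

lemma sum_fun_app: "(\<Sum>v\<in>B. f v) (x::'a) = (\<Sum>v\<in>B. f v x :: 'b::comm_monoid_add)"
  by (induction B rule: infinite_finite_induct) auto

lemma fib_finite:
  fixes a :: "int^'n \<Rightarrow> complex"
  assumes as: "(\<lambda>\<xi>. norm (a \<xi>)) summable_on UNIV" and mu: "\<mu> \<noteq> 0"
  shows "finite {\<xi>. a \<xi> = \<mu>}"
proof (rule ccontr)
  assume inf: "infinite {\<xi>. a \<xi> = \<mu>}"
  define S where "S = infsum (\<lambda>\<xi>. norm (a \<xi>)) UNIV"
  obtain n :: nat where n: "S / norm \<mu> < real n" using reals_Archimedean2 by blast
  obtain G where G: "finite G" "card G = n" "G \<subseteq> {\<xi>. a \<xi> = \<mu>}" using infinite_arbitrarily_large[OF inf] by blast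
  have "sum (\<lambda>\<xi>. norm (a \<xi>)) G \<le> S" unfolding S_def
    by (rule finite_sum_le_infsum[OF as G(1)]) auto
  moreover have "sum (\<lambda>\<xi>. norm (a \<xi>)) G = sum (\<lambda>_. norm \<mu>) G" using G(3) by (intro sum.cong) auto
  moreover have "sum (\<lambda>_. norm \<mu>) G = real n * norm \<mu>" using G(2) by simp
  ultimately have "real n * norm \<mu> \<le> S" by linarith
  then show False using n mu by (simp add: field_simps)
qed

lemma fm_pow: "((\<lambda>d. (\<lambda>\<xi>. fourier_mult a d \<xi> - \<mu> * d \<xi>)) ^^ k) c = (\<lambda>\<xi>. (a \<xi> - \<mu>)^k * c \<xi>)"
  by (induction k) (auto simp: fourier_mult_def algebra_simps)

lemma gen_eig_eq:
  fixes a :: "int^'n \<Rightarrow> complex"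
  assumes p: "0 < p" and fin: "finite {\<xi>. a \<xi> = \<mu>}"
  shows "gen_eigenspace w p 2 (fourier_mult a) \<mu> = {c. \<forall>\<xi>. a \<xi> \<noteq> \<mu> \<longrightarrow> c \<xi> = 0}"
proof safe
  fix c \<xi> assume c: "c \<in> gen_eigenspace w p 2 (fourier_mult a) \<mu>" and ne: "a \<xi> \<noteq> \<mu>"
  then obtain k where "(\<lambda>\<xi>. (a \<xi> - \<mu>)^k * c \<xi>) = 0" unfolding gen_eigenspace_def fm_pow by blast
  then have "(a \<xi> - \<mu>)^k * c \<xi> = 0" by (metis zero_fun_apply)
  then show "c \<xi> = 0" using ne by simp
next
  fix c :: "int^'n \<Rightarrow> complex" assume c: "\<forall>\<xi>. a \<xi> \<noteq> \<mu> \<longrightarrow> c \<xi> = 0"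
  have "c \<in> besov_space w p 2" by (rule finsupp_in[OF p fin]) (use c in auto)
  moreover have "((\<lambda>d. (\<lambda>\<xi>. fourier_mult a d \<xi> - \<mu> * d \<xi>)) ^^ 1) c = 0"
    unfolding fm_pow using c by (auto simp: fun_eq_iff)
  ultimately show "c \<in> gen_eigenspace w p 2 (fourier_mult a) \<mu>" unfolding gen_eigenspace_def by blast
qed

lemma vs_pointwise: "Vector_Spaces.vector_space (\<lambda>(s::complex) (f::'a \<Rightarrow> complex). (\<lambda>\<xi>. s * f \<xi>))"
  by unfold_locales (auto simp: fun_eq_iff algebra_simps)

lemma alg_mult_eq:
  fixes a :: "int^'n \<Rightarrow> complex"
  assumes p: "0 < p" and fin: "finite {\<xi>. a \<xi> = \<mu>}"
  shows "alg_mult w p 2 (fourier_mult a) \<mu> = card {\<xi>. a \<xi> = \<mu>}"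
proof -
  interpret VS: vector_space "\<lambda>(s::complex) (f::int^'n \<Rightarrow> complex). (\<lambda>\<xi>. s * f \<xi>)" by (rule vs_pointwise)
  define Fb where "Fb = {\<xi>. a \<xi> = \<mu>}"
  define V where "V = {c::int^'n \<Rightarrow> complex. \<forall>\<xi>. a \<xi> \<noteq> \<mu> \<longrightarrow> c \<xi> = 0}"
  define B where "B = ind ` Fb"
  have injind: "inj_on ind Fb" by (auto simp: inj_on_def ind_def fun_eq_iff)
  have finB: "finite B" unfolding B_def Fb_def using fin by simp
  have BV: "B \<subseteq> V" unfolding B_def V_def Fb_def by (auto simp: ind_def)
  have subV: "VS.subspace V" unfolding VS.subspace_def V_def by auto
  have VB: "V \<subseteq> VS.span B"
  proof
    fix c assume c: "c \<in> V"
    have "c = (\<Sum>\<xi>\<in>Fb. (\<lambda>\<eta>. c \<xi> * ind \<xi> \<eta>))"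
    proof
      fix \<eta>
      have "(\<Sum>\<xi>\<in>Fb. (\<lambda>\<eta>. c \<xi> * ind \<xi> \<eta>)) \<eta> = (\<Sum>\<xi>\<in>Fb. c \<xi> * ind \<xi> \<eta>)" by (rule sum_fun_app)
      also have "\<dots> = (\<Sum>\<xi>\<in>Fb. if \<xi> = \<eta> then c \<eta> else 0)" by (intro sum.cong) (auto simp: ind_def)
      also have "\<dots> = c \<eta>" using c fin by (auto simp: V_def Fb_def)
      finally show "c \<eta> = (\<Sum>\<xi>\<in>Fb. (\<lambda>\<eta>. c \<xi> * ind \<xi> \<eta>)) \<eta>" by simp
    qed
    also have "\<dots> \<in> VS.span B"
      by (intro VS.span_sum VS.span_scale VS.span_base) (auto simp: B_def)
    finally show "c \<in> VS.span B" .
  qed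
  have spanB: "VS.span B = V" by (rule VS.span_subspace[OF BV VB subV])
  have indep: "\<not> VS.dependent B"
  proof
    assume "VS.dependent B"
    then obtain u v0 where v0: "v0 \<in> B" "u v0 \<noteq> 0" and z: "(\<Sum>v\<in>B. (\<lambda>\<xi>. u v * v \<xi>)) = 0"
      unfolding VS.dependent_finite[OF finB] by blast
    obtain \<xi>0 where x0: "\<xi>0 \<in> Fb" "v0 = ind \<xi>0" using v0(1) B_def by blast
    have "0 = (\<Sum>v\<in>B. (\<lambda>\<xi>. u v * v \<xi>)) \<xi>0" using z by simp
    also have "\<dots> = (\<Sum>v\<in>B. u v * v \<xi>0)" by (rule sum_fun_app)
    also have "\<dots> = (\<Sum>v\<in>B. if v = v0 then u v0 else 0)"
    proof (intro sum.cong refl)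
      fix v assume "v \<in> B"
      then obtain \<xi> where v: "v = ind \<xi>" by (auto simp: B_def)
      show "u v * v \<xi>0 = (if v = v0 then u v0 else 0)"
      proof (cases "\<xi> = \<xi>0")
        case True then show ?thesis using v x0 by (simp add: ind_def)
      next
        case False
        then have "v \<xi>0 = 0" "v0 \<xi>0 = 1" using v x0 by (auto simp: ind_def)
        then have "v \<noteq> v0" by auto
        then show ?thesis using \<open>v \<xi>0 = 0\<close> by simp
      qed
    qed
    also have "\<dots> = u v0" using v0 finB by simp
    finally show False using v0 by simp
  qed
  have "alg_mult w p 2 (fourier_mult a) \<mu> = VS.dim V"
    unfolding alg_mult_def gen_eig_eq[OF p fin] V_def ..
  also have "\<dots> = card B" unfolding spanB[symmetric] by (rule VS.dim_span_eq_card_independent[OF indep])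
  also have "\<dots> = card Fb" unfolding B_def by (rule card_image[OF injind])
  finally show ?thesis unfolding Fb_def .
qed

lemma eigen_eq:
  fixes a :: "int^'n \<Rightarrow> complex"
  assumes p: "0 < p" and as: "(\<lambda>\<xi>. norm (a \<xi>)) summable_on UNIV"
  shows "besov_eigenvalues w p 2 (fourier_mult a) - {0} = range a - {0}"
proof safe
  fix \<mu> assume "\<mu> \<in> besov_eigenvalues w p 2 (fourier_mult a)" "\<mu> \<noteq> 0"
  then obtain c where c: "c \<in> besov_space w p 2" "c \<noteq> 0" "fourier_mult a c = (\<lambda>\<xi>. \<mu> * c \<xi>)"
    unfolding besov_eigenvalues_def by blast
  obtain \<xi> where "c \<xi> \<noteq> 0" using c(2) by (auto simp: fun_eq_iff)
  moreover have "a \<xi> * c \<xi> = \<mu> * c \<xi>" using fun_cong[OF c(3), of \<xi>] by (simp add: fourier_mult_def)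
  ultimately show "\<mu> \<in> range a" by (metis mult_cancel_right rangeI)
next
  fix \<xi> assume ne: "a \<xi> \<noteq> 0"
  have "ind \<xi> \<in> besov_space w p 2" by (rule ind_in[OF p])
  moreover have "ind \<xi> \<noteq> 0" by (auto simp: ind_def fun_eq_iff intro!: exI[of _ \<xi>])
  moreover have "fourier_mult a (ind \<xi>) = (\<lambda>\<eta>. a \<xi> * ind \<xi> \<eta>)" by (auto simp: fourier_mult_def ind_def)
  ultimately show "a \<xi> \<in> besov_eigenvalues w p 2 (fourier_mult a)" unfolding besov_eigenvalues_def by blast
qed

lemma eigen_sum:
  fixes a :: "int^'n \<Rightarrow> complex"
  assumes p: "0 < p" and as: "(\<lambda>\<xi>. norm (a \<xi>)) summable_on UNIV"
  shows "(\<lambda>\<mu>. \<mu> * of_nat (alg_mult w p 2 (fourier_mult a) \<mu>))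
        summable_on (besov_eigenvalues w p 2 (fourier_mult a) - {0})"
    "(\<Sum>\<^sub>\<infinity>\<mu>\<in>besov_eigenvalues w p 2 (fourier_mult a) - {0}.
        \<mu> * of_nat (alg_mult w p 2 (fourier_mult a) \<mu>)) = (\<Sum>\<^sub>\<infinity>\<xi>. a \<xi>)"
proof -
  define A where "A = range a - {0}"
  define Fb where "Fb \<mu> = {\<xi>. a \<xi> = \<mu>}" for \<mu>
  define Z where "Z = {\<xi>. a \<xi> \<noteq> 0}"
  define h where "h \<xi> = (a \<xi>, \<xi>)" for \<xi>
  have asum: "a summable_on UNIV" using as summable_on_iff_abs_summable_on_complex by blast
  have finFb: "finite (Fb \<mu>)" if "\<mu> \<in> A" for \<mu> using fib_finite[OF as] that by (auto simp: A_def Fb_def)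
  have am: "alg_mult w p 2 (fourier_mult a) \<mu> = card (Fb \<mu>)" if "\<mu> \<in> A" for \<mu>
    unfolding Fb_def by (rule alg_mult_eq[OF p]) (use finFb[OF that] in \<open>simp add: Fb_def\<close>)
  have inner: "infsum (\<lambda>\<xi>. a \<xi>) (Fb \<mu>) = \<mu> * of_nat (alg_mult w p 2 (fourier_mult a) \<mu>)" if "\<mu> \<in> A" for \<mu>
  proof -
    have "infsum (\<lambda>\<xi>. a \<xi>) (Fb \<mu>) = sum (\<lambda>\<xi>. a \<xi>) (Fb \<mu>)" using finFb[OF that] by simp
    also have "\<dots> = sum (\<lambda>_. \<mu>) (Fb \<mu>)" by (intro sum.cong) (auto simp: Fb_def)
    also have "\<dots> = \<mu> * of_nat (card (Fb \<mu>))" by (simp add: mult.commute)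
    finally show ?thesis using am[OF that] by simp
  qed
  have inj: "inj_on h Z" by (auto simp: inj_on_def h_def)
  have hZ: "h ` Z = Sigma A Fb" by (auto simp: h_def Z_def A_def Fb_def image_iff)
  have sZ: "a summable_on Z" by (rule summable_on_subset_banach[OF asum]) auto
  have sS: "(\<lambda>(x, y). a y) summable_on (Sigma A Fb)"
    unfolding hZ[symmetric] summable_on_reindex[OF inj] using sZ by (simp add: o_def h_def)
  have "infsum (\<lambda>x. infsum (\<lambda>y. a y) (Fb x)) A = infsum (\<lambda>(x, y). a y) (Sigma A Fb)"
    by (rule infsum_Sigma'_banach[OF sS])
  also have "\<dots> = infsum a Z"
    unfolding hZ[symmetric] infsum_reindex[OF inj] by (simp add: o_def h_def)
  also have "\<dots> = infsum a UNIV" by (rule infsum_cong_neutral) (auto simp: Z_def)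
  finally have eqs: "infsum (\<lambda>x. infsum (\<lambda>y. a y) (Fb x)) A = infsum a UNIV" .
  have sA: "(\<lambda>x. infsum (\<lambda>y. a y) (Fb x)) summable_on A" by (rule summable_on_Sigma_banach[OF sS])
  have EA: "besov_eigenvalues w p 2 (fourier_mult a) - {0} = A" unfolding A_def by (rule eigen_eq[OF p as])
  show "(\<lambda>\<mu>. \<mu> * of_nat (alg_mult w p 2 (fourier_mult a) \<mu>)) summable_on (besov_eigenvalues w p 2 (fourier_mult a) - {0})"
    unfolding EA using sA by (rule summable_on_cong[THEN iffD1, rotated]) (simp add: inner)
  show "(\<Sum>\<^sub>\<infinity>\<mu>\<in>besov_eigenvalues w p 2 (fourier_mult a) - {0}.
        \<mu> * of_nat (alg_mult w p 2 (fourier_mult a) \<mu>)) = (\<Sum>\<^sub>\<infinity>\<xi>. a \<xi>)"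
    unfolding EA eqs[symmetric] by (rule infsum_cong) (simp add: inner)
qed

theorem theorem5p3:
  fixes a :: "int^'n \<Rightarrow> complex" and p1 \<alpha> m C :: real
  assumes "1 < p1" and "p1 < 2"
    and "\<alpha> = 1 / p1 - 1 / 2"
    and "\<forall>\<xi>. norm (a \<xi>) \<le> C * jbracket \<xi> powr m"
    and "m < - real CARD('n) - \<alpha> * real CARD('n)"
  shows "\<forall>w::real.
    nuclear_on w p1 2 (fourier_mult a) \<and>
    a summable_on UNIV \<and>
    (\<forall>l y. nuclear_rep w p1 2 (fourier_mult a) l y \<longrightarrow>
        nuclear_trace_of l y = (\<Sum>\<^sub>\<infinity>\<xi>. a \<xi>)) \<and>
    (\<lambda>\<mu>. \<mu> * of_nat (alg_mult w p1 2 (fourier_mult a) \<mu>))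
        summable_on (besov_eigenvalues w p1 2 (fourier_mult a) - {0}) \<and>
    (\<Sum>\<^sub>\<infinity>\<mu>\<in>besov_eigenvalues w p1 2 (fourier_mult a) - {0}.
        \<mu> * of_nat (alg_mult w p1 2 (fourier_mult a) \<mu>)) = (\<Sum>\<^sub>\<infinity>\<xi>. a \<xi>)"
proof
  fix w :: real
  have p: "1 < p1" by fact
  have "1/2 \<le> 1/p1" using assms(1,2) by (simp add: field_simps)
  then have al: "0 \<le> \<alpha>" using assms(3) by simp
  have mn: "m < - real CARD('n)" using assms(5) al by (smt (verit) mult_nonneg_nonneg of_nat_0_le_iff)
  have as: "(\<lambda>\<xi>. norm (a \<xi>)) summable_on UNIV" by (rule a_abs_summable[OF assms(4) mn])
  have asum: "a summable_on UNIV" using as summable_on_iff_abs_summable_on_complex by blast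
  show "nuclear_on w p1 2 (fourier_mult a) \<and>
    a summable_on UNIV \<and>
    (\<forall>l y. nuclear_rep w p1 2 (fourier_mult a) l y \<longrightarrow>
        nuclear_trace_of l y = (\<Sum>\<^sub>\<infinity>\<xi>. a \<xi>)) \<and>
    (\<lambda>\<mu>. \<mu> * of_nat (alg_mult w p1 2 (fourier_mult a) \<mu>))
        summable_on (besov_eigenvalues w p1 2 (fourier_mult a) - {0}) \<and>
    (\<Sum>\<^sub>\<infinity>\<mu>\<in>besov_eigenvalues w p1 2 (fourier_mult a) - {0}.
        \<mu> * of_nat (alg_mult w p1 2 (fourier_mult a) \<mu>)) = (\<Sum>\<^sub>\<infinity>\<xi>. a \<xi>)"
    using nuclear_exists[OF p as] asum trace_unique[OF p as] eigen_sum[of p1 a w] p as by auto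
qed

end
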